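(* Let $\mathcal C$ be a discard category and let $\alpha,\beta$ be two regular stateful morphism sequences over $\mathcal C$ with the same input sequence $(A_i)_{i\ge1}$ and the same output sequence $(B_i)_{i\ge1}$. If $\alpha\equiv\beta$, then $\mathrm{FA}_k(\alpha)=\mathrm{FA}_k(\beta)$ for every $k\ge1$.
   Context: Monoidal categories are treated as strict (associators and unitors suppressed); $\sigma$ denotes the symmetry. A discard category is a symmetric monoidal category $(\mathcal C,\otimes,I)$ together with, for every object $A$, a morphism $\top_A:A\to I$ (the discard) such that $\top_I=\mathrm{id}_I$ and $\top_{A\otimes B}=\top_A\otimes\top_B$. A morphism $f:A\to B$ is causal if $\top_B\circ f=\top_A$. A stateful morphism sequence $\alpha$ over $\mathcal C$ consists of objects $(A_i)_{i\ge1}$ (inputs), $(B_i)_{i\ge1}$ (outputs), $(M_i)_{i\ge0}$ (memories) with $M_0=I$, and morphisms (layers) $\alpha_i\in\mathcal C(A_i\otimes M_{i-1},B_i\otimes M_i)$ for $i\ge1$. It is regular if there is $n$ such that for all $k\ge n$: $A_k=A_n$, $B_k=B_n$, $M_k=M_n$ and $\alpha_k=\alpha_n$. Composition and tensor of stateful sequences are defined layerwise: the memory of $\beta\circ\alpha$ (resp. $\alpha\otimes\beta$) at tick $k$ is $M^\alpha_k\otimes M^\beta_k$, and its $k$-th layer applies $\alpha_k$ and then $\beta_k$ (resp. $\alpha_k$ and $\beta_k$ side by side), with symmetries rearranging wires. The delay $D\alpha$ has $(D\alpha)_1=\mathrm{id}_I$ (with first input, output and memory $I$) and $(D\alpha)_k=\alpha_{k-1}$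 for $k\ge2$. Finite approximations: put $\Phi_1=\alpha_1:A_1\to B_1\otimes M_1$ and $\Phi_{k+1}=(\mathrm{id}_{B_1\otimes\cdots\otimes B_k}\otimes\alpha_{k+1})\circ(\mathrm{id}_{B_1\otimes\cdots\otimes B_k}\otimes\sigma_{M_k,A_{k+1}})\circ(\Phi_k\otimes\mathrm{id}_{A_{k+1}})$, a morphism $A_1\otimes\cdots\otimes A_{k+1}\to B_1\otimes\cdots\otimes B_{k+1}\otimes M_{k+1}$. Then $\mathrm{FA}_k(\alpha):=(\mathrm{id}_{B_1\otimes\cdots\otimes B_k}\otimes\top_{M_k})\circ\Phi_k$. The congruence $\equiv$: judgments $\Gamma\vdash\alpha=\beta$ between parallel regular stateful sequences, $\Gamma$ a set of such equations, are derived (by well-founded, possibly infinitely branching derivations) from: (hyp) $\Gamma\vdash\alpha=\beta$ if $(\alpha=\beta)\in\Gamma$; (CM) for $k\ge1$, $\beta_k\in\mathcal C(A_k\otimes M_{k-1},B_k\otimes N)$, a causal $c\in\mathcal C(N,M_k)$ and $\gamma\in\mathcal C(A_{k+1}\otimes M_k,B_{k+1}\otimes M_{k+1})$, the sequence with layers $k,k+1$ equal to $(\mathrm{id}\otimes c)\circ\beta_k,\gamma$ equals the sequence (memory $N$ at tick $k$) with layers $\beta_k,\gamma\circ(\mathrm{id}\otimes c)$, all other layers identical; (IM) for an idempotent $\pi\in\mathcal C(M_k,M_k)$, the sequence with layers $k,k+1$ equal to $(\mathrm{id}\otimes\pi)\circ\beta_k,\gamma$ equals the sequence with layers $(\mathrm{id}\otimes\pi)\circ\beta_k,\gamma\circ(\mathrm{id}\otimes\pi)$,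 others identical; reflexivity, symmetry, transitivity; closure under $\gamma\circ-$, $-\circ\gamma$, $\gamma\otimes-$, $-\otimes\gamma$; and coinduction: if $(\alpha^{(n)})_{n\ge0},(\beta^{(n)})_{n\ge0}$ are such that for every $n$, $\Gamma\cup\{D\alpha^{(n+1)}=D\beta^{(n+1)}\}\vdash\alpha^{(n)}=\beta^{(n)}$, then $\Gamma\vdash\alpha^{(0)}=\beta^{(0)}$. We write $\alpha\equiv\beta$ iff $\emptyset\vdash\alpha=\beta$. *)

theory Defs
  imports Main
begin

text \<open>Objects are the elements of type 'o, morphisms the elements of type 'm.
  ccomp g f is g after f (defined meaningfully when ccod f = cdom g).\<close>

record ('o, 'm) dcat =
  cdom  :: "'m \<Rightarrow> 'o"
  ccod  :: "'m \<Rightarrow> 'o"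
  ccomp :: "'m \<Rightarrow> 'm \<Rightarrow> 'm"
  cid   :: "'o \<Rightarrow> 'm"
  cunit :: "'o"
  cto   :: "'o \<Rightarrow> 'o \<Rightarrow> 'o"
  ctm   :: "'m \<Rightarrow> 'm \<Rightarrow> 'm"
  csym  :: "'o \<Rightarrow> 'o \<Rightarrow> 'm"
  cdisc :: "'o \<Rightarrow> 'm"

definition hom :: "('o, 'm) dcat \<Rightarrow> 'm \<Rightarrow> 'o \<Rightarrow> 'o \<Rightarrow> bool" where
  "hom C f A B \<longleftrightarrow> cdom C f = A \<and> ccod C f = B"

definition category :: "('o, 'm) dcat \<Rightarrow> bool" where
  "category C \<longleftrightarrow>
     (\<forall>A. hom C (cid C A) A A) \<and>
     (\<forall>f g. ccod C f = cdom C g \<longrightarrow> hom C (ccomp C g f) (cdom C f) (ccod C g)) \<and>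
     (\<forall>f. ccomp C f (cid C (cdom C f)) = f) \<and>
     (\<forall>f. ccomp C (cid C (ccod C f)) f = f) \<and>
     (\<forall>f g h. ccod C f = cdom C g \<longrightarrow> ccod C g = cdom C h \<longrightarrow>
        ccomp C h (ccomp C g f) = ccomp C (ccomp C h g) f)"

definition strict_monoidal :: "('o, 'm) dcat \<Rightarrow> bool" where
  "strict_monoidal C \<longleftrightarrow> category C \<and>
     (\<forall>f g. hom C (ctm C f g) (cto C (cdom C f) (cdom C g)) (cto C (ccod C f) (ccod C g))) \<and>
     (\<forall>A B D. cto C (cto C A B) D = cto C A (cto C B D)) \<and>
     (\<forall>A. cto C (cunit C) A = A \<and> cto C A (cunit C) = A) \<and>
     (\<forall>f g h. ctm C (ctm C f g) h = ctm C f (ctm C g h)) \<and>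
     (\<forall>f. ctm C (cid C (cunit C)) f = f \<and> ctm C f (cid C (cunit C)) = f) \<and>
     (\<forall>A B. ctm C (cid C A) (cid C B) = cid C (cto C A B)) \<and>
     (\<forall>f g f' g'. ccod C f = cdom C g \<longrightarrow> ccod C f' = cdom C g' \<longrightarrow>
        ctm C (ccomp C g f) (ccomp C g' f') = ccomp C (ctm C g g') (ctm C f f'))"

definition symmetric_monoidal :: "('o, 'm) dcat \<Rightarrow> bool" where
  "symmetric_monoidal C \<longleftrightarrow> strict_monoidal C \<and>
     (\<forall>A B. hom C (csym C A B) (cto C A B) (cto C B A)) \<and>
     (\<forall>f g. ccomp C (csym C (ccod C f) (ccod C g)) (ctm C f g)
            = ccomp C (ctm C g f) (csym C (cdom C f) (cdom C g))) \<and>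
     (\<forall>A B. ccomp C (csym C B A) (csym C A B) = cid C (cto C A B)) \<and>
     (\<forall>A B D. csym C A (cto C B D)
        = ccomp C (ctm C (cid C B) (csym C A D)) (ctm C (csym C A B) (cid C D)))"

definition discard_cat :: "('o, 'm) dcat \<Rightarrow> bool" where
  "discard_cat C \<longleftrightarrow> symmetric_monoidal C \<and>
     (\<forall>A. hom C (cdisc C A) A (cunit C)) \<and>
     cdisc C (cunit C) = cid C (cunit C) \<and>
     (\<forall>A B. cdisc C (cto C A B) = ctm C (cdisc C A) (cdisc C B))"

definition causal :: "('o, 'm) dcat \<Rightarrow> 'm \<Rightarrow> bool" where
  "causal C f \<longleftrightarrow> ccomp C (cdisc C (ccod C f)) f = cdisc C (cdom C f)"

text \<open>Indices of inp, outp, lay start at 1; index 0 is normalised to the unit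
  (resp. the identity on the unit). mem 0 is the unit M_0 = I.\<close>

record ('o, 'm) sseq =
  inp  :: "nat \<Rightarrow> 'o"
  outp :: "nat \<Rightarrow> 'o"
  mem  :: "nat \<Rightarrow> 'o"
  lay  :: "nat \<Rightarrow> 'm"

definition wf_seq :: "('o, 'm) dcat \<Rightarrow> ('o, 'm) sseq \<Rightarrow> bool" where
  "wf_seq C a \<longleftrightarrow>
     inp a 0 = cunit C \<and> outp a 0 = cunit C \<and> mem a 0 = cunit C \<and>
     lay a 0 = cid C (cunit C) \<and>
     (\<forall>i\<ge>1. hom C (lay a i) (cto C (inp a i) (mem a (i - 1))) (cto C (outp a i) (mem a i)))"

definition regular :: "('o, 'm) sseq \<Rightarrow> bool" where
  "regular a \<longleftrightarrow> (\<exists>n\<ge>1. \<forall>k\<ge>n. inp a k = inp a n \<and> outp a k = outp a n \<and>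
                               mem a k = mem a n \<and> lay a k = lay a n)"

definition good :: "('o, 'm) dcat \<Rightarrow> ('o, 'm) sseq \<Rightarrow> bool" where
  "good C a \<longleftrightarrow> wf_seq C a \<and> regular a"

text \<open>seq_comp C b a is b after a (requires outp a = inp b).\<close>
definition seq_comp :: "('o, 'm) dcat \<Rightarrow> ('o, 'm) sseq \<Rightarrow> ('o, 'm) sseq \<Rightarrow> ('o, 'm) sseq" where
  "seq_comp C b a =
     \<lparr> inp = inp a, outp = outp b,
       mem = (\<lambda>k. cto C (mem a k) (mem b k)),
       lay = (\<lambda>k. if k = 0 then cid C (cunit C) else
          ccomp C (ctm C (cid C (outp b k)) (csym C (mem b k) (mem a k)))
           (ccomp C (ctm C (lay b k) (cid C (mem a k)))
             (ccomp C (ctm C (cid C (outp a k)) (csym C (mem a k) (mem b (k - 1))))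
                (ctm C (lay a k) (cid C (mem b (k - 1))))))) \<rparr>"

definition seq_tens :: "('o, 'm) dcat \<Rightarrow> ('o, 'm) sseq \<Rightarrow> ('o, 'm) sseq \<Rightarrow> ('o, 'm) sseq" where
  "seq_tens C a b =
     \<lparr> inp = (\<lambda>k. cto C (inp a k) (inp b k)), outp = (\<lambda>k. cto C (outp a k) (outp b k)),
       mem = (\<lambda>k. cto C (mem a k) (mem b k)),
       lay = (\<lambda>k. if k = 0 then cid C (cunit C) else
          ccomp C (ctm C (ctm C (cid C (outp a k)) (csym C (mem a k) (outp b k))) (cid C (mem b k)))
           (ccomp C (ctm C (lay a k) (lay b k))
              (ctm C (ctm C (cid C (inp a k)) (csym C (inp b k) (mem a (k - 1)))) (cid C (mem b (k - 1)))))) \<rparr>"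

definition delay :: "('o, 'm) dcat \<Rightarrow> ('o, 'm) sseq \<Rightarrow> ('o, 'm) sseq" where
  "delay C a =
     \<lparr> inp = (\<lambda>k. if k \<le> 1 then cunit C else inp a (k - 1)),
       outp = (\<lambda>k. if k \<le> 1 then cunit C else outp a (k - 1)),
       mem = (\<lambda>k. if k \<le> 1 then cunit C else mem a (k - 1)),
       lay = (\<lambda>k. if k \<le> 1 then cid C (cunit C) else lay a (k - 1)) \<rparr>"

type_synonym ('o, 'm) eqn = "('o, 'm) sseq \<times> ('o, 'm) sseq"

inductive deriv :: "('o, 'm) dcat \<Rightarrow> ('o, 'm) eqn set \<Rightarrow> ('o, 'm) sseq \<Rightarrow> ('o, 'm) sseq \<Rightarrow> bool"
  for C :: "('o, 'm) dcat" where
  hyp: "(a, b) \<in> G \<Longrightarrow> deriv C G a b"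
| cm: "\<lbrakk> good C s; 1 \<le> k;
         hom C bk (cto C (inp s k) (mem s (k - 1))) (cto C (outp s k) N);
         hom C c N (mem s k); causal C c;
         hom C g (cto C (inp s (Suc k)) (mem s k)) (cto C (outp s (Suc k)) (mem s (Suc k))) \<rbrakk>
       \<Longrightarrow> deriv C G
            (s\<lparr>lay := (lay s)(k := ccomp C (ctm C (cid C (outp s k)) c) bk, Suc k := g)\<rparr>)
            (s\<lparr>mem := (mem s)(k := N),
               lay := (lay s)(k := bk, Suc k := ccomp C g (ctm C (cid C (inp s (Suc k))) c))\<rparr>)"
| im: "\<lbrakk> good C s; 1 \<le> k;
         hom C bk (cto C (inp s k) (mem s (k - 1))) (cto C (outp s k) (mem s k));
         hom C p (mem s k) (mem s k); ccomp C p p = p;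
         hom C g (cto C (inp s (Suc k)) (mem s k)) (cto C (outp s (Suc k)) (mem s (Suc k))) \<rbrakk>
       \<Longrightarrow> deriv C G
            (s\<lparr>lay := (lay s)(k := ccomp C (ctm C (cid C (outp s k)) p) bk, Suc k := g)\<rparr>)
            (s\<lparr>lay := (lay s)(k := ccomp C (ctm C (cid C (outp s k)) p) bk,
                              Suc k := ccomp C g (ctm C (cid C (inp s (Suc k))) p))\<rparr>)"
| refl: "good C a \<Longrightarrow> deriv C G a a"
| sym: "deriv C G a b \<Longrightarrow> deriv C G b a"
| trans: "deriv C G a b \<Longrightarrow> deriv C G b c \<Longrightarrow> deriv C G a c"
| comp_left: "\<lbrakk> deriv C G a b; good C h; outp a = inp h; outp b = inp h \<rbrakk>
       \<Longrightarrow> deriv C G (seq_comp C h a) (seq_comp C h b)"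
| comp_right: "\<lbrakk> deriv C G a b; good C h; outp h = inp a; outp h = inp b \<rbrakk>
       \<Longrightarrow> deriv C G (seq_comp C a h) (seq_comp C b h)"
| tens_left: "\<lbrakk> deriv C G a b; good C h \<rbrakk> \<Longrightarrow> deriv C G (seq_tens C h a) (seq_tens C h b)"
| tens_right: "\<lbrakk> deriv C G a b; good C h \<rbrakk> \<Longrightarrow> deriv C G (seq_tens C a h) (seq_tens C b h)"
| coind: "\<lbrakk> \<forall>n. good C (as n) \<and> good C (bs n) \<and> inp (as n) = inp (bs n) \<and> outp (as n) = outp (bs n);
           \<forall>n. deriv C (insert (delay C (as (Suc n)), delay C (bs (Suc n))) G) (as n) (bs n) \<rbrakk>
       \<Longrightarrow> deriv C G (as 0) (bs 0)"

definition sequiv :: "('o, 'm) dcat \<Rightarrow> ('o, 'm) sseq \<Rightarrow> ('o, 'm) sseq \<Rightarrow> bool" where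
  "sequiv C a b \<longleftrightarrow> deriv C {} a b"

fun outs :: "('o, 'm) dcat \<Rightarrow> ('o, 'm) sseq \<Rightarrow> nat \<Rightarrow> 'o" where
  "outs C a 0 = cunit C"
| "outs C a (Suc k) = cto C (outs C a k) (outp a (Suc k))"

fun Phi :: "('o, 'm) dcat \<Rightarrow> ('o, 'm) sseq \<Rightarrow> nat \<Rightarrow> 'm" where
  "Phi C a 0 = cid C (cunit C)"
| "Phi C a (Suc 0) = lay a 1"
| "Phi C a (Suc (Suc k)) =
     ccomp C (ctm C (cid C (outs C a (Suc k))) (lay a (Suc (Suc k))))
      (ccomp C (ctm C (cid C (outs C a (Suc k))) (csym C (mem a (Suc k)) (inp a (Suc (Suc k)))))
         (ctm C (Phi C a (Suc k)) (cid C (inp a (Suc (Suc k))))))"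

definition FA :: "('o, 'm) dcat \<Rightarrow> nat \<Rightarrow> ('o, 'm) sseq \<Rightarrow> 'm" where
  "FA C k a = ccomp C (ctm C (cid C (outs C a k)) (cdisc C (mem a k))) (Phi C a k)"

end

theory Submission
  imports Defs
begin

locale DC =
  fixes C :: "('o, 'm) dcat"
  assumes dc: "discard_cat C"
begin

abbreviation cp (infixr "\<cdot>" 55) where "g \<cdot> f \<equiv> ccomp C g f"
abbreviation tm (infixr "\<otimes>" 60) where "f \<otimes> g \<equiv> ctm C f g"
abbreviation ob (infixr "\<oplus>" 60) where "A \<oplus> B \<equiv> cto C A B"
abbreviation ID where "ID A \<equiv> cid C A"
abbreviation U where "U \<equiv> cunit C"
abbreviation sw where "sw A B \<equiv> csym C A B"
abbreviation dsc where "dsc A \<equiv> cdisc C A"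
abbreviation dm where "dm f \<equiv> cdom C f"
abbreviation cd where "cd f \<equiv> ccod C f"

lemma cat: "category C" and sm: "strict_monoidal C" and sym: "symmetric_monoidal C"
  using dc unfolding discard_cat_def symmetric_monoidal_def strict_monoidal_def by auto

lemma dom_id[simp]: "dm (ID A) = A" and cod_id[simp]: "cd (ID A) = A"
  using cat unfolding category_def hom_def by auto

lemma dom_comp[simp]: "cd f = dm g \<Longrightarrow> dm (g \<cdot> f) = dm f"
  and cod_comp[simp]: "cd f = dm g \<Longrightarrow> cd (g \<cdot> f) = cd g"
  using cat unfolding category_def hom_def by auto

lemma comp_id[simp]: "X = dm f \<Longrightarrow> f \<cdot> ID X = f"
  and id_comp[simp]: "X = cd f \<Longrightarrow> ID X \<cdot> f = f"
  using cat unfolding category_def by auto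

lemma assoc[simp]: "cd f = dm g \<Longrightarrow> cd g = dm h \<Longrightarrow> (h \<cdot> g) \<cdot> f = h \<cdot> (g \<cdot> f)"
  using cat unfolding category_def by auto

lemma dom_tm[simp]: "dm (f \<otimes> g) = dm f \<oplus> dm g" and cod_tm[simp]: "cd (f \<otimes> g) = cd f \<oplus> cd g"
  using sm unfolding strict_monoidal_def hom_def by auto

lemma ob_assoc[simp]: "(A \<oplus> B) \<oplus> D = A \<oplus> (B \<oplus> D)"
  and ob_unitl[simp]: "U \<oplus> A = A" and ob_unitr[simp]: "A \<oplus> U = A"
  and tm_assoc[simp]: "(f \<otimes> g) \<otimes> h = f \<otimes> (g \<otimes> h)"
  and tm_unitl[simp]: "ID U \<otimes> f = f" and tm_unitr[simp]: "f \<otimes> ID U = f"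
  using sm unfolding strict_monoidal_def by auto

lemma id_split: "ID (A \<oplus> B) = ID A \<otimes> ID B"
  using sm unfolding strict_monoidal_def by auto

lemma id_merge[simp]: "ID A \<otimes> ID B = ID (A \<oplus> B)" and id_merge2[simp]: "ID A \<otimes> (ID B \<otimes> f) = ID (A \<oplus> B) \<otimes> f"
  using id_split tm_assoc by metis+

lemma interchange: "cd f = dm g \<Longrightarrow> cd f' = dm g' \<Longrightarrow> (g \<cdot> f) \<otimes> (g' \<cdot> f') = (g \<otimes> g') \<cdot> (f \<otimes> f')"
  using sm unfolding strict_monoidal_def by auto

lemma dom_sw[simp]: "dm (sw A B) = A \<oplus> B" and cod_sw[simp]: "cd (sw A B) = B \<oplus> A"
  using sym unfolding symmetric_monoidal_def hom_def by auto

lemma sw_nat: "sw (cd f) (cd g) \<cdot> (f \<otimes> g) = (g \<otimes> f) \<cdot> sw (dm f) (dm g)"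
  and sw_inv: "sw B A \<cdot> sw A B = ID (A \<oplus> B)"
  and hex: "sw A (B \<oplus> D) = (ID B \<otimes> sw A D) \<cdot> (sw A B \<otimes> ID D)"
  using sym unfolding symmetric_monoidal_def by auto

lemma dom_dsc[simp]: "dm (dsc A) = A" and cod_dsc[simp]: "cd (dsc A) = U"
  and dsc_U[simp]: "dsc U = ID U" and dsc_ob: "dsc (A \<oplus> B) = dsc A \<otimes> dsc B"
  using dc unfolding discard_cat_def hom_def by auto


lemma sw_U: "sw A U = ID A" and sw_U': "sw U A = ID A"
proof -
  have h: "sw A U = sw A U \<cdot> sw A U" using hex[of A U U] by simp
  have i1: "sw U A \<cdot> sw A U = ID A" using sw_inv[of U A] by simp
  have i2: "sw A U \<cdot> sw U A = ID A" using sw_inv[of A U] by simp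
  have "sw A U = sw A U \<cdot> (sw A U \<cdot> sw U A)" using i2 by simp
  also have "\<dots> = (sw A U \<cdot> sw A U) \<cdot> sw U A" by simp
  also have "\<dots> = ID A" using h i2 by simp
  finally show a: "sw A U = ID A" .
  show "sw U A = ID A" using i1 a by simp
qed

lemma wl: "cd f = dm g \<Longrightarrow> (ID X \<otimes> g) \<cdot> (ID X \<otimes> f) = ID X \<otimes> (g \<cdot> f)"
  using interchange[of "ID X" "ID X" f g] by simp
lemma wl': "cd f = dm g \<Longrightarrow> cd h = dm (ID X \<otimes> f) \<Longrightarrow> (ID X \<otimes> g) \<cdot> (ID X \<otimes> f) \<cdot> h = ID X \<otimes> (g \<cdot> f) \<cdot> h"
  by (simp add: wl[symmetric])
lemma wr: "cd f = dm g \<Longrightarrow> (g \<otimes> ID X) \<cdot> (f \<otimes> ID X) = (g \<cdot> f) \<otimes> ID X"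
  using interchange[of f g "ID X" "ID X"] by simp
lemma xch1: "(f \<otimes> ID (cd g)) \<cdot> (ID (dm f) \<otimes> g) = f \<otimes> g"
  using interchange[of "ID (dm f)" f g "ID (cd g)"] by simp
lemma xch2: "(ID (cd f) \<otimes> g) \<cdot> (f \<otimes> ID (dm g)) = f \<otimes> g"
  using interchange[of f "ID (cd f)" "ID (dm g)" g] by simp

end

fun ins :: "('o, 'm) dcat \<Rightarrow> ('o, 'm) sseq \<Rightarrow> nat \<Rightarrow> 'o" where
  "ins C a 0 = cunit C"
| "ins C a (Suc k) = cto C (ins C a k) (inp a (Suc k))"

context DC begin

definition step where
  "step Ob M A P l = (ID Ob \<otimes> l) \<cdot> (ID Ob \<otimes> sw M A) \<cdot> (P \<otimes> ID A)"

lemma wf_lay: "wf_seq C a \<Longrightarrow> dm (lay a (Suc j)) = inp a (Suc j) \<oplus> mem a j \<and> cd (lay a (Suc j)) = outp a (Suc j) \<oplus> mem a (Suc j)"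
  unfolding wf_seq_def hom_def by (metis diff_Suc_1 le_add1 plus_1_eq_Suc)

lemma wf_dom[simp]: "wf_seq C a \<Longrightarrow> dm (lay a (Suc j)) = inp a (Suc j) \<oplus> mem a j"
  and wf_cod[simp]: "wf_seq C a \<Longrightarrow> cd (lay a (Suc j)) = outp a (Suc j) \<oplus> mem a (Suc j)"
  using wf_lay by auto

lemma wf0[simp]: "wf_seq C a \<Longrightarrow> mem a 0 = U" "wf_seq C a \<Longrightarrow> inp a 0 = U" "wf_seq C a \<Longrightarrow> outp a 0 = U"
  unfolding wf_seq_def by auto

lemma step_typ: "cd P = Ob \<oplus> M \<Longrightarrow> dm l = A \<oplus> M \<Longrightarrow> dm (step Ob M A P l) = dm P \<oplus> A \<and> cd (step Ob M A P l) = Ob \<oplus> cd l"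
  unfolding step_def by simp

lemma Phi_Suc: "wf_seq C a \<Longrightarrow> Phi C a (Suc j) = step (outs C a j) (mem a j) (inp a (Suc j)) (Phi C a j) (lay a (Suc j))"
proof (cases j)
  case 0
  assume w: "wf_seq C a"
  then show ?thesis using 0 by (simp add: step_def sw_U' wf_lay)
next
  case (Suc k)
  then show ?thesis by (simp add: step_def)
qed

lemma Phi_typ: "wf_seq C a \<Longrightarrow> dm (Phi C a j) = ins C a j \<and> cd (Phi C a j) = outs C a j \<oplus> mem a j"
proof (induction j)
  case 0 then show ?case by simp
next
  case (Suc j)
  then show ?case by (simp add: Phi_Suc step_typ)
qed

lemma Phi_dom[simp]: "wf_seq C a \<Longrightarrow> dm (Phi C a j) = ins C a j"
  and Phi_cod[simp]: "wf_seq C a \<Longrightarrow> cd (Phi C a j) = outs C a j \<oplus> mem a j"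
  using Phi_typ by auto

end

context DC begin

lemma step_slide:
  assumes "cd c = M" "dm c = N" "cd P = Ob \<oplus> N" "dm l = A \<oplus> M"
  shows "step Ob N A P (l \<cdot> (ID A \<otimes> c)) = step Ob M A ((ID Ob \<otimes> c) \<cdot> P) l"
proof -
  have n: "(ID A \<otimes> c) \<cdot> sw N A = sw M A \<cdot> (c \<otimes> ID A)"
    using sw_nat[of c "ID A"] assms by simp
  have "step Ob N A P (l \<cdot> (ID A \<otimes> c)) = (ID Ob \<otimes> l) \<cdot> (ID Ob \<otimes> (ID A \<otimes> c)) \<cdot> (ID Ob \<otimes> sw N A) \<cdot> (P \<otimes> ID A)"
    unfolding step_def using assms by (simp add: wl[symmetric])
  also have "\<dots> = (ID Ob \<otimes> l) \<cdot> (ID Ob \<otimes> ((ID A \<otimes> c) \<cdot> sw N A)) \<cdot> (P \<otimes> ID A)"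
    using assms by (simp add: wl'[symmetric] del: tm_assoc)
  also have "\<dots> = (ID Ob \<otimes> l) \<cdot> (ID Ob \<otimes> sw M A) \<cdot> (ID Ob \<otimes> (c \<otimes> ID A)) \<cdot> (P \<otimes> ID A)"
    using assms by (simp add: n wl'[symmetric] del: tm_assoc)
  also have "\<dots> = (ID Ob \<otimes> l) \<cdot> (ID Ob \<otimes> sw M A) \<cdot> (((ID Ob \<otimes> c) \<cdot> P) \<otimes> ID A)"
    using assms wr[of P "ID Ob \<otimes> c" A] by simp
  finally show ?thesis unfolding step_def .
qed

end

context DC begin

lemma outs_local: "(\<forall>i\<le>j. outp a i = outp b i) \<Longrightarrow> outs C a j = outs C b j"
  by (induction j) auto

lemma Phi_local: "(\<forall>i\<le>j. lay a i = lay b i \<and> mem a i = mem b i \<and> inp a i = inp b i \<and> outp a i = outp b i)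
   \<Longrightarrow> Phi C a j = Phi C b j"
proof (induction j)
  case 0 then show ?case by simp
next
  case (Suc j)
  show ?case
  proof (cases j)
    case 0 then show ?thesis using Suc.prems by simp
  next
    case (Suc k)
    have "outs C a j = outs C b j" using Suc.prems by (intro outs_local) auto
    moreover have "Phi C a j = Phi C b j" using Suc.IH Suc.prems by simp
    ultimately show ?thesis using Suc.prems \<open>j = Suc k\<close> by simp
  qed
qed

lemma Phi_tail:
  assumes wa: "wf_seq C a" and wb: "wf_seq C b" and P: "Phi C a m = Phi C b m"
    and o: "outp a = outp b" and r: "\<forall>i\<ge>m. mem a i = mem b i \<and> inp a (Suc i) = inp b (Suc i) \<and> lay a (Suc i) = lay b (Suc i)"
    and j: "m \<le> j"
  shows "Phi C a j = Phi C b j"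
  using j
proof (induction j rule: dec_induct)
  case base then show ?case using P by simp
next
  case (step j)
  have "outs C a j = outs C b j" using o by (intro outs_local) auto
  then show ?case using step wa wb r o by (simp add: Phi_Suc)
qed

lemma step_post: "cd l = dm f \<Longrightarrow> cd P = Ob \<oplus> M \<Longrightarrow> dm l = A \<oplus> M \<Longrightarrow>
   step Ob M A P (f \<cdot> l) = (ID Ob \<otimes> f) \<cdot> step Ob M A P l"
  unfolding step_def by (simp add: wl[symmetric])

lemma FA_def': "FA C k a = (ID (outs C a k) \<otimes> dsc (mem a k)) \<cdot> Phi C a k"
  unfolding FA_def ..

end

context DC begin

lemma cm_sound:
  assumes ws: "wf_seq C s" and k: "1 \<le> k"
    and hbk: "hom C bk (inp s k \<oplus> mem s (k - 1)) (outp s k \<oplus> N)"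
    and hc: "hom C c N (mem s k)" and cc: "causal C c"
    and hg: "hom C g (inp s (Suc k) \<oplus> mem s k) (outp s (Suc k) \<oplus> mem s (Suc k))"
  defines "L \<equiv> s\<lparr>lay := (lay s)(k := (ID (outp s k) \<otimes> c) \<cdot> bk, Suc k := g)\<rparr>"
    and "R \<equiv> s\<lparr>mem := (mem s)(k := N), lay := (lay s)(k := bk, Suc k := g \<cdot> (ID (inp s (Suc k)) \<otimes> c))\<rparr>"
  shows "wf_seq C L \<and> wf_seq C R \<and> (\<forall>j. FA C j L = FA C j R)"
proof -
  obtain k' where kk: "k = Suc k'" using k by (cases k) auto
  have hom': "\<And>i. i \<ge> 1 \<Longrightarrow> hom C (lay s i) (inp s i \<oplus> mem s (i - 1)) (outp s i \<oplus> mem s i)"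
    using ws unfolding wf_seq_def by auto
  have tc: "dm c = N" "cd c = mem s k" using hc unfolding hom_def by auto
  have tb: "dm bk = inp s k \<oplus> mem s k'" "cd bk = outp s k \<oplus> N" using hbk kk unfolding hom_def by auto
  have tg: "dm g = inp s (Suc k) \<oplus> mem s k" "cd g = outp s (Suc k) \<oplus> mem s (Suc k)" using hg unfolding hom_def by auto
  have wL: "wf_seq C L"
    unfolding wf_seq_def
  proof (intro conjI allI impI)
    show "inp L 0 = U" "outp L 0 = U" "mem L 0 = U" "lay L 0 = ID U" using ws k unfolding L_def wf_seq_def by auto
    fix i :: nat assume i: "1 \<le> i"
    consider "i = k" | "i = Suc k" | "i \<noteq> k \<and> i \<noteq> Suc k" by blast
    then show "hom C (lay L i) (inp L i \<oplus> mem L (i - 1)) (outp L i \<oplus> mem L i)"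
    proof cases
      case 1 then show ?thesis unfolding L_def hom_def using tc tb kk by simp
    next
      case 2 then show ?thesis unfolding L_def hom_def using tg kk by simp
    next
      case 3 then show ?thesis unfolding L_def using hom' i by simp
    qed
  qed
  have wR: "wf_seq C R"
    unfolding wf_seq_def
  proof (intro conjI allI impI)
    show "inp R 0 = U" "outp R 0 = U" "mem R 0 = U" "lay R 0 = ID U" using ws k unfolding R_def wf_seq_def by auto
    fix i :: nat assume i: "1 \<le> i"
    consider "i = k" | "i = Suc k" | "i \<noteq> k \<and> i \<noteq> Suc k" by blast
    then show "hom C (lay R i) (inp R i \<oplus> mem R (i - 1)) (outp R i \<oplus> mem R i)"
    proof cases
      case 1 then show ?thesis unfolding R_def hom_def using tc tb kk by simp
    next
      case 2 then show ?thesis unfolding R_def hom_def using tg tc kk by simp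
    next
      case 3
      then have "i - 1 \<noteq> k" using kk i by auto
      then show ?thesis unfolding R_def using hom' i 3 by simp
    qed
  qed
  have loc: "Phi C L j = Phi C R j" if "j < k" for j
    by (rule Phi_local) (use that in \<open>auto simp: L_def R_def\<close>)
  have oLR: "outp L = outp R" "inp L = inp R" unfolding L_def R_def by auto
  have PLk: "Phi C L k = (ID (outs C R k) \<otimes> c) \<cdot> Phi C R k"
  proof -
    have e: "Phi C L k' = Phi C R k'" using loc kk by simp
    have m: "mem L k' = mem R k'" "mem L k' = mem s k'" unfolding L_def R_def using kk by auto
    have os: "outs C L k' = outs C R k'" by (rule outs_local) (simp add: oLR)
    have "Phi C L k = step (outs C R k') (mem s k') (inp s k) (Phi C R k') ((ID (outp s k) \<otimes> c) \<cdot> bk)"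
      using Phi_Suc[OF wL, of k'] kk e m os unfolding L_def by simp
    also have "\<dots> = (ID (outs C R k') \<otimes> (ID (outp s k) \<otimes> c)) \<cdot> step (outs C R k') (mem s k') (inp s k) (Phi C R k') bk"
      by (rule step_post) (use wR tb tc m in auto)
    also have "step (outs C R k') (mem s k') (inp s k) (Phi C R k') bk = Phi C R k"
      using Phi_Suc[OF wR, of k'] kk m unfolding R_def by simp
    finally show ?thesis using kk by (simp add: R_def)
  qed
  have PLk1: "Phi C L (Suc k) = Phi C R (Suc k)"
  proof -
    have os: "outs C L k = outs C R k" by (rule outs_local) (simp add: oLR)
    have "Phi C R (Suc k) = step (outs C R k) N (inp s (Suc k)) (Phi C R k) (g \<cdot> (ID (inp s (Suc k)) \<otimes> c))"
      using Phi_Suc[OF wR, of k] unfolding R_def by simp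
    also have "\<dots> = step (outs C R k) (mem s k) (inp s (Suc k)) ((ID (outs C R k) \<otimes> c) \<cdot> Phi C R k) g"
      by (rule step_slide) (use wR tc tg in \<open>auto simp: R_def\<close>)
    also have "\<dots> = Phi C L (Suc k)"
      using Phi_Suc[OF wL, of k] PLk os unfolding L_def by simp
    finally show ?thesis by simp
  qed
  have FAk: "FA C k L = FA C k R"
  proof -
    have os: "outs C L k = outs C R k" by (rule outs_local) (simp add: oLR)
    have cz: "dsc (mem s k) \<cdot> c = dsc N" using cc tc unfolding causal_def by simp
    have "FA C k L = (ID (outs C R k) \<otimes> dsc (mem s k)) \<cdot> (ID (outs C R k) \<otimes> c) \<cdot> Phi C R k"
      unfolding FA_def' PLk os by (simp add: L_def)
    also have "\<dots> = (ID (outs C R k) \<otimes> (dsc (mem s k) \<cdot> c)) \<cdot> Phi C R k"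
      using wR tc Phi_cod[OF wR, of k] by (simp add: wl'[symmetric] R_def del: tm_assoc)
    also have "\<dots> = FA C k R" unfolding FA_def' cz by (simp add: R_def)
    finally show ?thesis .
  qed
  have "FA C j L = FA C j R" for j
  proof -
    consider "j < k" | "j = k" | "j > k" by arith
    then show ?thesis
    proof cases
      case 1
      have os: "outs C L j = outs C R j" by (rule outs_local) (simp add: oLR)
      have "mem L j = mem R j" using 1 unfolding L_def R_def by auto
      then show ?thesis unfolding FA_def' using loc[OF 1] os by simp
    next
      case 2 then show ?thesis using FAk by simp
    next
      case 3
      have os: "outs C L j = outs C R j" by (rule outs_local) (simp add: oLR)
      have "Phi C L j = Phi C R j"
        by (rule Phi_tail[OF wL wR PLk1]) (use 3 in \<open>auto simp: L_def R_def\<close>)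
      moreover have "mem L j = mem R j" using 3 unfolding L_def R_def by auto
      ultimately show ?thesis unfolding FA_def' using os by simp
    qed
  qed
  then show ?thesis using wL wR by simp
qed

end

context DC begin

lemma im_sound:
  assumes ws: "wf_seq C s" and k: "1 \<le> k"
    and hbk: "hom C bk (inp s k \<oplus> mem s (k - 1)) (outp s k \<oplus> mem s k)"
    and hp: "hom C p (mem s k) (mem s k)" and pp: "p \<cdot> p = p"
    and hg: "hom C g (inp s (Suc k) \<oplus> mem s k) (outp s (Suc k) \<oplus> mem s (Suc k))"
  defines "L \<equiv> s\<lparr>lay := (lay s)(k := (ID (outp s k) \<otimes> p) \<cdot> bk, Suc k := g)\<rparr>"
    and "R \<equiv> s\<lparr>lay := (lay s)(k := (ID (outp s k) \<otimes> p) \<cdot> bk, Suc k := g \<cdot> (ID (inp s (Suc k)) \<otimes> p))\<rparr>"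
  shows "wf_seq C L \<and> wf_seq C R \<and> (\<forall>j. FA C j L = FA C j R)"
proof -
  obtain k' where kk: "k = Suc k'" using k by (cases k) auto
  have hom': "\<And>i. i \<ge> 1 \<Longrightarrow> hom C (lay s i) (inp s i \<oplus> mem s (i - 1)) (outp s i \<oplus> mem s i)"
    using ws unfolding wf_seq_def by auto
  have tc: "dm p = mem s k" "cd p = mem s k" using hp unfolding hom_def by auto
  have tb: "dm bk = inp s k \<oplus> mem s k'" "cd bk = outp s k \<oplus> mem s k" using hbk kk unfolding hom_def by auto
  have tg: "dm g = inp s (Suc k) \<oplus> mem s k" "cd g = outp s (Suc k) \<oplus> mem s (Suc k)" using hg unfolding hom_def by auto
  have wL: "wf_seq C L"
    unfolding wf_seq_def
  proof (intro conjI allI impI)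
    show "inp L 0 = U" "outp L 0 = U" "mem L 0 = U" "lay L 0 = ID U" using ws k unfolding L_def wf_seq_def by auto
    fix i :: nat assume i: "1 \<le> i"
    consider "i = k" | "i = Suc k" | "i \<noteq> k \<and> i \<noteq> Suc k" by blast
    then show "hom C (lay L i) (inp L i \<oplus> mem L (i - 1)) (outp L i \<oplus> mem L i)"
    proof cases
      case 1 then show ?thesis unfolding L_def hom_def using tc tb kk by simp
    next
      case 2 then show ?thesis unfolding L_def hom_def using tg kk by simp
    next
      case 3 then show ?thesis unfolding L_def using hom' i by simp
    qed
  qed
  have wR: "wf_seq C R"
    unfolding wf_seq_def
  proof (intro conjI allI impI)
    show "inp R 0 = U" "outp R 0 = U" "mem R 0 = U" "lay R 0 = ID U" using ws k unfolding R_def wf_seq_def by auto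
    fix i :: nat assume i: "1 \<le> i"
    consider "i = k" | "i = Suc k" | "i \<noteq> k \<and> i \<noteq> Suc k" by blast
    then show "hom C (lay R i) (inp R i \<oplus> mem R (i - 1)) (outp R i \<oplus> mem R i)"
    proof cases
      case 1 then show ?thesis unfolding R_def hom_def using tc tb kk by simp
    next
      case 2 then show ?thesis unfolding R_def hom_def using tg tc kk by simp
    next
      case 3 then show ?thesis unfolding R_def using hom' i 3 by simp
    qed
  qed
  have loc: "Phi C L j = Phi C R j" if "j \<le> k" for j
    by (rule Phi_local) (use that in \<open>auto simp: L_def R_def\<close>)
  have oLR: "outp L = outp R" "inp L = inp R" "mem L = mem R" "mem R = mem s" unfolding L_def R_def by auto
  have PRk: "(ID (outs C R k) \<otimes> p) \<cdot> Phi C R k = Phi C R k"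
  proof -
    have m: "mem R k' = mem s k'" using oLR by simp
    have "Phi C R k = step (outs C R k') (mem s k') (inp s k) (Phi C R k') ((ID (outp s k) \<otimes> p) \<cdot> bk)"
      using Phi_Suc[OF wR, of k'] kk m unfolding R_def by simp
    also have "\<dots> = (ID (outs C R k') \<otimes> (ID (outp s k) \<otimes> p)) \<cdot> step (outs C R k') (mem s k') (inp s k) (Phi C R k') bk"
      by (rule step_post) (use wR tb tc m in auto)
    finally have e: "Phi C R k = (ID (outs C R k) \<otimes> p) \<cdot> step (outs C R k') (mem s k') (inp s k) (Phi C R k') bk"
      using kk by (simp add: R_def)
    have ty: "cd (step (outs C R k') (mem s k') (inp s k) (Phi C R k') bk) = outs C R k \<oplus> mem s k"
      using step_typ[of "Phi C R k'" "outs C R k'" "mem s k'" bk "inp s k"] wR tb m kk by (simp add: R_def)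
    have "(ID (outs C R k) \<otimes> p) \<cdot> Phi C R k = (ID (outs C R k) \<otimes> (p \<cdot> p)) \<cdot> step (outs C R k') (mem s k') (inp s k) (Phi C R k') bk"
      unfolding e using ty tc by (simp add: wl'[symmetric] del: tm_assoc)
    then show ?thesis using e pp by simp
  qed
  have PLk1: "Phi C L (Suc k) = Phi C R (Suc k)"
  proof -
    have os: "outs C L k = outs C R k" by (rule outs_local) (simp add: oLR)
    have "Phi C R (Suc k) = step (outs C R k) (mem s k) (inp s (Suc k)) (Phi C R k) (g \<cdot> (ID (inp s (Suc k)) \<otimes> p))"
      using Phi_Suc[OF wR, of k] unfolding R_def by simp
    also have "\<dots> = step (outs C R k) (mem s k) (inp s (Suc k)) ((ID (outs C R k) \<otimes> p) \<cdot> Phi C R k) g"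
      by (rule step_slide) (use wR tc tg in \<open>auto simp: R_def\<close>)
    also have "\<dots> = Phi C L (Suc k)"
      using Phi_Suc[OF wL, of k] PRk os loc[of k] unfolding L_def by simp
    finally show ?thesis by simp
  qed
  have "FA C j L = FA C j R" for j
  proof -
    have os: "outs C L j = outs C R j" by (rule outs_local) (simp add: oLR)
    consider "j \<le> k" | "j > k" by arith
    then show ?thesis
    proof cases
      case 1
      then show ?thesis unfolding FA_def' using loc[OF 1] os oLR by simp
    next
      case 2
      have "Phi C L j = Phi C R j"
        by (rule Phi_tail[OF wL wR PLk1]) (use 2 in \<open>auto simp: L_def R_def\<close>)
      then show ?thesis unfolding FA_def' using os oLR by simp
    qed
  qed
  then show ?thesis using wL wR by simp
qed

end

context DC begin

lemma wf_delay: assumes w: "wf_seq C a" shows "wf_seq C (delay C a)"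
  unfolding wf_seq_def
proof (intro conjI allI impI)
  show "inp (delay C a) 0 = U" "outp (delay C a) 0 = U" "mem (delay C a) 0 = U" "lay (delay C a) 0 = ID U"
    by (auto simp: delay_def)
  fix i :: nat assume i: "1 \<le> i"
  show "hom C (lay (delay C a) i) (inp (delay C a) i \<oplus> mem (delay C a) (i - 1)) (outp (delay C a) i \<oplus> mem (delay C a) i)"
  proof (cases "i = 1")
    case True then show ?thesis by (simp add: delay_def hom_def)
  next
    case False
    then obtain j where j: "i = Suc (Suc j)" using i by (metis One_nat_def Suc_le_D Suc_le_mono le_add1 not0_implies_Suc plus_1_eq_Suc)
    show ?thesis
    proof (cases j)
      case 0 then show ?thesis using j w by (simp add: delay_def hom_def)
    next
      case (Suc j') then show ?thesis using j w by (simp add: delay_def hom_def)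
    qed
  qed
qed

lemma delay_outs: "wf_seq C a \<Longrightarrow> outs C (delay C a) (Suc k) = outs C a k"
  by (induction k) (auto simp: delay_def)

lemma delay_Phi: assumes w: "wf_seq C a" shows "Phi C (delay C a) (Suc k) = Phi C a k"
proof (induction k)
  case 0 then show ?case by (simp add: delay_def)
next
  case (Suc k)
  have "Phi C (delay C a) (Suc (Suc k)) = step (outs C a k) (mem a k) (inp a (Suc k)) (Phi C a k) (lay a (Suc k))"
    using Phi_Suc[OF wf_delay[OF w], of "Suc k"] Suc delay_outs[OF w, of k] w
    by (cases k) (simp_all add: delay_def)
  then show ?case using Phi_Suc[OF w] by simp
qed

lemma delay_FA: assumes w: "wf_seq C a" shows "FA C (Suc k) (delay C a) = FA C k a"
proof -
  have "mem (delay C a) (Suc k) = mem a k" using w by (cases k) (auto simp: delay_def)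
  then show ?thesis unfolding FA_def' using delay_Phi[OF w] delay_outs[OF w] by simp
qed

lemma FA0: "wf_seq C a \<Longrightarrow> FA C 0 a = ID U"
  unfolding FA_def' by simp

end

context DC begin

lemma inv_unique: "cd f = dm g \<Longrightarrow> cd g = dm f \<Longrightarrow> cd q = dm f \<Longrightarrow> g \<cdot> f = ID (dm f) \<Longrightarrow> f \<cdot> q = ID (cd f) \<Longrightarrow> q = g"
proof -
  assume a: "cd f = dm g" "cd g = dm f" "cd q = dm f" "g \<cdot> f = ID (dm f)" "f \<cdot> q = ID (cd f)"
  have "q = ID (dm f) \<cdot> q" using a by simp
  also have "\<dots> = (g \<cdot> f) \<cdot> q" using a by simp
  also have "\<dots> = g \<cdot> (f \<cdot> q)" using a by (rule_tac assoc) simp_all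
  also have "\<dots> = g" using a by simp
  finally show ?thesis .
qed

lemma hex2: "sw (X \<oplus> Y) Z = (sw X Z \<otimes> ID Y) \<cdot> (ID X \<otimes> sw Y Z)"
proof -
  have "(sw X Z \<otimes> ID Y) \<cdot> (ID X \<otimes> sw Y Z) = sw (X \<oplus> Y) Z"
  proof (rule inv_unique[of "sw Z (X \<oplus> Y)"])
    show "sw Z (X \<oplus> Y) \<cdot> (sw X Z \<otimes> ID Y) \<cdot> (ID X \<otimes> sw Y Z) = ID (cd (sw Z (X \<oplus> Y)))"
    proof -
      have "sw Z (X \<oplus> Y) \<cdot> (sw X Z \<otimes> ID Y) \<cdot> (ID X \<otimes> sw Y Z) = (ID X \<otimes> sw Z Y) \<cdot> ((sw Z X \<otimes> ID Y) \<cdot> (sw X Z \<otimes> ID Y)) \<cdot> (ID X \<otimes> sw Y Z)"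
        by (simp add: hex del: tm_assoc)
      also have "\<dots> = (ID X \<otimes> sw Z Y) \<cdot> (ID X \<otimes> sw Y Z)"
        by (simp add: wr sw_inv del: tm_assoc)
      also have "\<dots> = ID (X \<oplus> Y \<oplus> Z)" by (simp add: wl sw_inv)
      finally show ?thesis by simp
    qed
  qed (simp_all add: sw_inv)
  then show ?thesis by simp
qed

end

context DC begin

lemma comp_core:
  assumes t: "dm la = A \<oplus> Ma" "cd la = B \<oplus> Ma'"
  shows "(ID B \<otimes> sw Ma' Mh) \<cdot> (la \<otimes> ID Mh) \<cdot> sw (Ma \<oplus> Mh) A \<cdot> (sw Mh Ma \<otimes> ID A)
       = (sw Mh B \<otimes> ID Ma') \<cdot> (ID Mh \<otimes> la) \<cdot> (ID Mh \<otimes> sw Ma A)"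
proof -
  have "(ID B \<otimes> sw Ma' Mh) \<cdot> (la \<otimes> ID Mh) \<cdot> sw (Ma \<oplus> Mh) A \<cdot> (sw Mh Ma \<otimes> ID A)
      = (ID B \<otimes> sw Ma' Mh) \<cdot> (la \<otimes> ID Mh) \<cdot> (sw Ma A \<otimes> ID Mh) \<cdot> (ID Ma \<otimes> sw Mh A) \<cdot> (sw Mh Ma \<otimes> ID A)"
    by (simp add: hex2 t)
  also have "\<dots> = (ID B \<otimes> sw Ma' Mh) \<cdot> ((la \<cdot> sw Ma A) \<otimes> ID Mh) \<cdot> sw Mh (Ma \<oplus> A)"
    using t by (simp add: hex wr[symmetric] del: tm_assoc)
  also have "((la \<cdot> sw Ma A) \<otimes> ID Mh) \<cdot> sw Mh (Ma \<oplus> A) = sw Mh (B \<oplus> Ma') \<cdot> (ID Mh \<otimes> (la \<cdot> sw Ma A))"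
    using sw_nat[of "ID Mh" "la \<cdot> sw Ma A"] t by simp
  also have "(ID B \<otimes> sw Ma' Mh) \<cdot> sw Mh (B \<oplus> Ma') \<cdot> (ID Mh \<otimes> (la \<cdot> sw Ma A)) = (sw Mh B \<otimes> ID Ma') \<cdot> (ID Mh \<otimes> (la \<cdot> sw Ma A))"
  proof -
    have "(ID B \<otimes> sw Ma' Mh) \<cdot> sw Mh (B \<oplus> Ma') = (sw Mh B \<otimes> ID Ma')"
      by (simp add: hex wl wl' sw_inv del: tm_assoc)
    then show ?thesis using t by (simp del: assoc add: assoc[symmetric])
  qed
  also have "\<dots> = (sw Mh B \<otimes> ID Ma') \<cdot> (ID Mh \<otimes> la) \<cdot> (ID Mh \<otimes> sw Ma A)"
    using t by (simp add: wl)
  finally show ?thesis .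
qed

end

context DC begin

lemma box_slide: "(f \<otimes> ID (cd g)) \<cdot> (ID (dm f) \<otimes> g) = (ID (cd f) \<otimes> g) \<cdot> (f \<otimes> ID (dm g))"
  by (simp add: xch1 xch2)

lemma box_slide': "cd h = dm f \<oplus> dm g \<Longrightarrow> (f \<otimes> ID (cd g)) \<cdot> (ID (dm f) \<otimes> g) \<cdot> h = (ID (cd f) \<otimes> g) \<cdot> (f \<otimes> ID (dm g)) \<cdot> h"
proof -
  assume h: "cd h = dm f \<oplus> dm g"
  have "(f \<otimes> ID (cd g)) \<cdot> (ID (dm f) \<otimes> g) \<cdot> h = ((f \<otimes> ID (cd g)) \<cdot> (ID (dm f) \<otimes> g)) \<cdot> h"
    using h by (rule_tac assoc[symmetric]) simp_all
  also have "\<dots> = ((ID (cd f) \<otimes> g) \<cdot> (f \<otimes> ID (dm g))) \<cdot> h" by (simp only: box_slide)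
  also have "\<dots> = (ID (cd f) \<otimes> g) \<cdot> (f \<otimes> ID (dm g)) \<cdot> h"
    using h by (rule_tac assoc) simp_all
  finally show ?thesis .
qed

lemma comp_step:
  assumes t: "cd Pa = Oa \<oplus> Ma" "dm Ph = Oa" "cd Ph = Ob \<oplus> Mh"
    "dm la = A \<oplus> Ma" "cd la = B \<oplus> Ma'" "dm lh = B \<oplus> Mh" "cd lh = D \<oplus> Mh'"
  shows "step Ob (Ma \<oplus> Mh) A ((ID Ob \<otimes> sw Mh Ma) \<cdot> (Ph \<otimes> ID Ma) \<cdot> Pa)
            ((ID D \<otimes> sw Mh' Ma') \<cdot> (lh \<otimes> ID Ma') \<cdot> (ID B \<otimes> sw Ma' Mh) \<cdot> (la \<otimes> ID Mh))
       = (ID (Ob \<oplus> D) \<otimes> sw Mh' Ma') \<cdot> (step Ob Mh B Ph lh \<otimes> ID Ma') \<cdot> step Oa Ma A Pa la"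
    (is "?L = ?R")
proof -
  define K where "K = (ID D \<otimes> sw Mh' Ma') \<cdot> (lh \<otimes> ID Ma') \<cdot> (sw Mh B \<otimes> ID Ma') \<cdot> (ID Mh \<otimes> la) \<cdot> (ID Mh \<otimes> sw Ma A)"
  have tK: "dm K = Mh \<oplus> Ma \<oplus> A" "cd K = D \<oplus> Ma' \<oplus> Mh'" unfolding K_def using t by simp_all
  have pc: "((ID Ob \<otimes> sw Mh Ma) \<cdot> (Ph \<otimes> ID Ma) \<cdot> Pa) \<otimes> ID A = ((ID Ob \<otimes> sw Mh Ma) \<otimes> ID A) \<cdot> ((Ph \<otimes> ID Ma) \<otimes> ID A) \<cdot> (Pa \<otimes> ID A)"
  proof -
    have "((ID Ob \<otimes> sw Mh Ma) \<cdot> (Ph \<otimes> ID Ma) \<cdot> Pa) \<otimes> ID A = ((ID Ob \<otimes> sw Mh Ma) \<otimes> ID A) \<cdot> (((Ph \<otimes> ID Ma) \<cdot> Pa) \<otimes> ID A)"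
      by (rule wr[symmetric]) (use t in simp)
    also have "((Ph \<otimes> ID Ma) \<cdot> Pa) \<otimes> ID A = ((Ph \<otimes> ID Ma) \<otimes> ID A) \<cdot> (Pa \<otimes> ID A)"
      by (rule wr[symmetric]) (use t in simp)
    finally show ?thesis .
  qed
  have "?L = (ID Ob \<otimes> ((ID D \<otimes> sw Mh' Ma') \<cdot> (lh \<otimes> ID Ma') \<cdot> (ID B \<otimes> sw Ma' Mh) \<cdot> (la \<otimes> ID Mh)))
       \<cdot> (ID Ob \<otimes> sw (Ma \<oplus> Mh) A) \<cdot> ((ID Ob \<otimes> sw Mh Ma) \<otimes> ID A) \<cdot> ((Ph \<otimes> ID Ma) \<otimes> ID A) \<cdot> (Pa \<otimes> ID A)"
    unfolding step_def pc ..
  also have "\<dots> = (ID Ob \<otimes> ((ID D \<otimes> sw Mh' Ma') \<cdot> (lh \<otimes> ID Ma') \<cdot> ((ID B \<otimes> sw Ma' Mh) \<cdot> (la \<otimes> ID Mh)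
       \<cdot> sw (Ma \<oplus> Mh) A \<cdot> (sw Mh Ma \<otimes> ID A)))) \<cdot> (Ph \<otimes> ID (Ma \<oplus> A)) \<cdot> (Pa \<otimes> ID A)"
    using t by (simp add: wl[symmetric] wl'[symmetric])
  also have "\<dots> = (ID Ob \<otimes> K) \<cdot> (Ph \<otimes> ID (Ma \<oplus> A)) \<cdot> (Pa \<otimes> ID A)"
    unfolding K_def comp_core[OF t(4,5)] ..
  finally have L: "?L = (ID Ob \<otimes> K) \<cdot> (Ph \<otimes> ID (Ma \<oplus> A)) \<cdot> (Pa \<otimes> ID A)" .
  have "?R = (ID (Ob \<oplus> D) \<otimes> sw Mh' Ma') \<cdot> (ID Ob \<otimes> lh \<otimes> ID Ma') \<cdot> (ID Ob \<otimes> sw Mh B \<otimes> ID Ma') \<cdot> (Ph \<otimes> ID (B \<oplus> Ma'))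
       \<cdot> (ID Oa \<otimes> la) \<cdot> (ID Oa \<otimes> sw Ma A) \<cdot> (Pa \<otimes> ID A)"
    unfolding step_def using t by (simp add: wr[symmetric] del: id_merge2)
  also have "(Ph \<otimes> ID (B \<oplus> Ma')) \<cdot> (ID Oa \<otimes> la) \<cdot> (ID Oa \<otimes> sw Ma A) \<cdot> (Pa \<otimes> ID A)
      = (ID (Ob \<oplus> Mh) \<otimes> la) \<cdot> (ID (Ob \<oplus> Mh) \<otimes> sw Ma A) \<cdot> (Ph \<otimes> ID (Ma \<oplus> A)) \<cdot> (Pa \<otimes> ID A)"
  proof -
    have 1: "(Ph \<otimes> ID (B \<oplus> Ma')) \<cdot> (ID Oa \<otimes> la) \<cdot> (ID Oa \<otimes> sw Ma A) \<cdot> (Pa \<otimes> ID A)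
        = (ID (Ob \<oplus> Mh) \<otimes> la) \<cdot> (Ph \<otimes> ID (A \<oplus> Ma)) \<cdot> (ID Oa \<otimes> sw Ma A) \<cdot> (Pa \<otimes> ID A)"
      using box_slide'[of "(ID Oa \<otimes> sw Ma A) \<cdot> (Pa \<otimes> ID A)" Ph la] t by simp
    have 2: "(Ph \<otimes> ID (A \<oplus> Ma)) \<cdot> (ID Oa \<otimes> sw Ma A) \<cdot> (Pa \<otimes> ID A)
        = (ID (Ob \<oplus> Mh) \<otimes> sw Ma A) \<cdot> (Ph \<otimes> ID (Ma \<oplus> A)) \<cdot> (Pa \<otimes> ID A)"
      using box_slide'[of "Pa \<otimes> ID A" Ph "sw Ma A"] t by simp
    show ?thesis unfolding 1 2 ..
  qed
  also have "(ID (Ob \<oplus> D) \<otimes> sw Mh' Ma') \<cdot> (ID Ob \<otimes> lh \<otimes> ID Ma') \<cdot> (ID Ob \<otimes> sw Mh B \<otimes> ID Ma') \<cdot> 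
      (ID (Ob \<oplus> Mh) \<otimes> la) \<cdot> (ID (Ob \<oplus> Mh) \<otimes> sw Ma A) \<cdot> (Ph \<otimes> ID (Ma \<oplus> A)) \<cdot> (Pa \<otimes> ID A)
      = (ID Ob \<otimes> K) \<cdot> (Ph \<otimes> ID (Ma \<oplus> A)) \<cdot> (Pa \<otimes> ID A)"
  proof -
    have "ID Ob \<otimes> K = (ID (Ob \<oplus> D) \<otimes> sw Mh' Ma') \<cdot> (ID Ob \<otimes> lh \<otimes> ID Ma') \<cdot> (ID Ob \<otimes> sw Mh B \<otimes> ID Ma') \<cdot> 
      (ID (Ob \<oplus> Mh) \<otimes> la) \<cdot> (ID (Ob \<oplus> Mh) \<otimes> sw Ma A)"
      unfolding K_def using t by (simp add: wl[symmetric])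
    then show ?thesis using t tK by simp
  qed
  finally show ?thesis using L by simp
qed

end

context DC begin

lemma comp_basic:
  assumes wa: "wf_seq C a" and wh: "wf_seq C h" and o: "outp a = inp h"
  shows "inp (seq_comp C h a) = inp a" "outp (seq_comp C h a) = outp h"
    "mem (seq_comp C h a) j = mem a j \<oplus> mem h j"
    "lay (seq_comp C h a) (Suc j) = (ID (outp h (Suc j)) \<otimes> sw (mem h (Suc j)) (mem a (Suc j))) \<cdot> (lay h (Suc j) \<otimes> ID (mem a (Suc j)))
        \<cdot> (ID (outp a (Suc j)) \<otimes> sw (mem a (Suc j)) (mem h j)) \<cdot> (lay a (Suc j) \<otimes> ID (mem h j))"
  unfolding seq_comp_def by simp_all

lemma wf_comp:
  assumes wa: "wf_seq C a" and wh: "wf_seq C h" and o: "outp a = inp h"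
  shows "wf_seq C (seq_comp C h a)"
  unfolding wf_seq_def
proof (intro conjI allI impI)
  show "inp (seq_comp C h a) 0 = U" "outp (seq_comp C h a) 0 = U" "mem (seq_comp C h a) 0 = U" "lay (seq_comp C h a) 0 = ID U"
    using wa wh by (auto simp: seq_comp_def)
  fix i :: nat assume i: "1 \<le> i"
  then obtain j where j: "i = Suc j" by (cases i) auto
  have oo: "outp a (Suc j) = inp h (Suc j)" using o by simp
  show "hom C (lay (seq_comp C h a) i) (inp (seq_comp C h a) i \<oplus> mem (seq_comp C h a) (i - 1)) (outp (seq_comp C h a) i \<oplus> mem (seq_comp C h a) i)"
    unfolding hom_def j comp_basic[OF wa wh o] using wa wh oo by simp
qed

lemma ins_outs: "outp a = inp h \<Longrightarrow> ins C h j = outs C a j"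
  by (induction j) auto

lemma comp_Phi:
  assumes wa: "wf_seq C a" and wh: "wf_seq C h" and o: "outp a = inp h"
  shows "Phi C (seq_comp C h a) j = (ID (outs C h j) \<otimes> sw (mem h j) (mem a j)) \<cdot> (Phi C h j \<otimes> ID (mem a j)) \<cdot> Phi C a j"
proof (induction j)
  case 0 then show ?case using wa wh by (simp add: sw_U)
next
  case (Suc j)
  have wc: "wf_seq C (seq_comp C h a)" by (rule wf_comp[OF wa wh o])
  have os: "outs C (seq_comp C h a) j = outs C h j" by (rule outs_local) (simp add: comp_basic[OF wa wh o])
  have oo: "outp a (Suc j) = inp h (Suc j)" using o by simp
  have "Phi C (seq_comp C h a) (Suc j) = step (outs C h j) (mem a j \<oplus> mem h j) (inp a (Suc j))
      ((ID (outs C h j) \<otimes> sw (mem h j) (mem a j)) \<cdot> (Phi C h j \<otimes> ID (mem a j)) \<cdot> Phi C a j)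
      ((ID (outp h (Suc j)) \<otimes> sw (mem h (Suc j)) (mem a (Suc j))) \<cdot> (lay h (Suc j) \<otimes> ID (mem a (Suc j)))
        \<cdot> (ID (outp a (Suc j)) \<otimes> sw (mem a (Suc j)) (mem h j)) \<cdot> (lay a (Suc j) \<otimes> ID (mem h j)))"
    using Phi_Suc[OF wc, of j] Suc os by (simp only: comp_basic[OF wa wh o])
  also have "\<dots> = (ID (outs C h j \<oplus> outp h (Suc j)) \<otimes> sw (mem h (Suc j)) (mem a (Suc j))) \<cdot>
      (step (outs C h j) (mem h j) (outp a (Suc j)) (Phi C h j) (lay h (Suc j)) \<otimes> ID (mem a (Suc j))) \<cdot>
      step (outs C a j) (mem a j) (inp a (Suc j)) (Phi C a j) (lay a (Suc j))"
    by (rule comp_step) (use wa wh oo ins_outs[OF o] in simp_all)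
  also have "\<dots> = (ID (outs C h (Suc j)) \<otimes> sw (mem h (Suc j)) (mem a (Suc j))) \<cdot> (Phi C h (Suc j) \<otimes> ID (mem a (Suc j))) \<cdot> Phi C a (Suc j)"
    using Phi_Suc[OF wa, of j] Phi_Suc[OF wh, of j] oo by simp
  finally show ?case .
qed

lemma comp_FA:
  assumes wa: "wf_seq C a" and wh: "wf_seq C h" and o: "outp a = inp h"
  shows "FA C j (seq_comp C h a) = FA C j h \<cdot> FA C j a"
proof -
  let ?Ob = "outs C h j" and ?Oa = "outs C a j" and ?Ma = "mem a j" and ?Mh = "mem h j"
  have os: "outs C (seq_comp C h a) j = ?Ob" by (rule outs_local) (simp add: comp_basic[OF wa wh o])
  have io: "ins C h j = ?Oa" by (rule ins_outs[OF o])
  have d: "(dsc ?Ma \<otimes> dsc ?Mh) \<cdot> sw ?Mh ?Ma = dsc ?Mh \<otimes> dsc ?Ma"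
    using sw_nat[of "dsc ?Mh" "dsc ?Ma"] by (simp add: sw_U)
  have "FA C j (seq_comp C h a) = (ID ?Ob \<otimes> (dsc ?Ma \<otimes> dsc ?Mh)) \<cdot> (ID ?Ob \<otimes> sw ?Mh ?Ma) \<cdot> (Phi C h j \<otimes> ID ?Ma) \<cdot> Phi C a j"
    unfolding FA_def' os comp_Phi[OF wa wh o] by (simp add: comp_basic[OF wa wh o] dsc_ob)
  also have "\<dots> = (ID ?Ob \<otimes> dsc ?Mh \<otimes> dsc ?Ma) \<cdot> (Phi C h j \<otimes> ID ?Ma) \<cdot> Phi C a j"
  proof -
    have e: "(ID ?Ob \<otimes> (dsc ?Ma \<otimes> dsc ?Mh)) \<cdot> (ID ?Ob \<otimes> sw ?Mh ?Ma) = ID ?Ob \<otimes> dsc ?Mh \<otimes> dsc ?Ma"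
      using wl[of "sw ?Mh ?Ma" "dsc ?Ma \<otimes> dsc ?Mh" ?Ob] d by simp
    have "(ID ?Ob \<otimes> (dsc ?Ma \<otimes> dsc ?Mh)) \<cdot> (ID ?Ob \<otimes> sw ?Mh ?Ma) \<cdot> (Phi C h j \<otimes> ID ?Ma) \<cdot> Phi C a j
       = ((ID ?Ob \<otimes> (dsc ?Ma \<otimes> dsc ?Mh)) \<cdot> (ID ?Ob \<otimes> sw ?Mh ?Ma)) \<cdot> (Phi C h j \<otimes> ID ?Ma) \<cdot> Phi C a j"
      by (rule assoc[symmetric]) (use wa wh io in simp_all)
    then show ?thesis unfolding e .
  qed
  also have "\<dots> = (FA C j h \<otimes> dsc ?Ma) \<cdot> Phi C a j"
  proof -
    have "(ID ?Ob \<otimes> dsc ?Mh \<otimes> dsc ?Ma) \<cdot> (Phi C h j \<otimes> ID ?Ma) = FA C j h \<otimes> dsc ?Ma"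
      unfolding FA_def' using interchange[of "Phi C h j" "ID ?Ob \<otimes> dsc ?Mh" "ID ?Ma" "dsc ?Ma"] wh by simp
    moreover have "(ID ?Ob \<otimes> dsc ?Mh \<otimes> dsc ?Ma) \<cdot> (Phi C h j \<otimes> ID ?Ma) \<cdot> Phi C a j = ((ID ?Ob \<otimes> dsc ?Mh \<otimes> dsc ?Ma) \<cdot> (Phi C h j \<otimes> ID ?Ma)) \<cdot> Phi C a j"
      by (rule assoc[symmetric]) (use wa wh io in simp_all)
    ultimately show ?thesis by simp
  qed
  also have "FA C j h \<otimes> dsc ?Ma = FA C j h \<cdot> (ID ?Oa \<otimes> dsc ?Ma)"
    using interchange[of "ID ?Oa" "FA C j h" "dsc ?Ma" "ID U"] wh io unfolding FA_def' by simp
  also have "(FA C j h \<cdot> (ID ?Oa \<otimes> dsc ?Ma)) \<cdot> Phi C a j = FA C j h \<cdot> FA C j a"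
    unfolding FA_def'[of j a] by (rule assoc) (use wa wh io in \<open>simp_all add: FA_def'\<close>)
  finally show ?thesis .
qed

end

context DC begin

lemma tailr: "g \<cdot> f = g' \<cdot> f' \<Longrightarrow> cd f = dm g \<Longrightarrow> cd f' = dm g' \<Longrightarrow> cd h = dm f \<Longrightarrow> cd h = dm f' \<Longrightarrow> g \<cdot> f \<cdot> h = g' \<cdot> f' \<cdot> h"
  by (metis assoc)

lemma swsw: "sw B A \<cdot> sw A B \<cdot> h = h" if "cd h = A \<oplus> B"
  using tailr[of "sw B A" "sw A B" "ID (A \<oplus> B)" "ID (A \<oplus> B)" h] that by (simp add: sw_inv)

lemma cancel_w:
  "(ID X \<otimes> sw B A \<otimes> ID Y) \<cdot> (ID X \<otimes> sw A B \<otimes> ID Y) = ID (X \<oplus> A \<oplus> B \<oplus> Y)"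
  "(sw B A \<otimes> ID Y) \<cdot> (sw A B \<otimes> ID Y) = ID (A \<oplus> B \<oplus> Y)"
  "(ID X \<otimes> sw B A) \<cdot> (ID X \<otimes> sw A B) = ID (X \<oplus> A \<oplus> B)"
  by (simp_all add: wl wr sw_inv del: tm_assoc id_merge2)

lemma idtail: "g \<cdot> f = ID Z \<Longrightarrow> cd f = dm g \<Longrightarrow> cd h = dm f \<Longrightarrow> g \<cdot> f \<cdot> h = h"
  by (metis assoc id_comp dom_comp cod_comp dom_id)

lemma cancel_wt:
  "cd h = X \<oplus> A \<oplus> B \<oplus> Y \<Longrightarrow> (ID X \<otimes> sw B A \<otimes> ID Y) \<cdot> (ID X \<otimes> sw A B \<otimes> ID Y) \<cdot> h = h"
  "cd h = A \<oplus> B \<oplus> Y \<Longrightarrow> (sw B A \<otimes> ID Y) \<cdot> (sw A B \<otimes> ID Y) \<cdot> h = h"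
  "cd h = X \<oplus> A \<oplus> B \<Longrightarrow> (ID X \<otimes> sw B A) \<cdot> (ID X \<otimes> sw A B) \<cdot> h = h"
    apply (rule idtail[OF cancel_w(1)]; simp)
   apply (rule idtail[OF cancel_w(2)]; simp)
  apply (rule idtail[OF cancel_w(3)]; simp)
  done

end

context DC begin

lemma tail_of: "g \<cdot> f = k \<Longrightarrow> cd f = dm g \<Longrightarrow> cd h = dm f \<Longrightarrow> g \<cdot> f \<cdot> h = k \<cdot> h"
  by (metis assoc)

lemma Q1: "(ID Ax \<otimes> sw Ay Mx \<otimes> ID My) \<cdot> sw (Mx \<oplus> My) (Ax \<oplus> Ay) = (sw Mx Ax \<otimes> sw My Ay) \<cdot> (ID Mx \<otimes> sw My Ax \<otimes> ID Ay)"
  using tail_of[OF xch2[of "sw Mx Ax" "sw My Ay"]]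
  by (simp add: hex hex2 wl[symmetric] wr[symmetric] wl'[symmetric] cancel_w cancel_wt)

lemma P1: "(sw Bx Oy \<otimes> ID (By \<oplus> Mx' \<oplus> My')) \<cdot> (ID Bx \<otimes> sw Mx' (Oy \<oplus> By) \<otimes> ID My') \<cdot> (sw Oy (Bx \<oplus> Mx') \<otimes> ID (By \<oplus> My'))
   = ID (Oy \<oplus> Bx) \<otimes> sw Mx' By \<otimes> ID My'"
  using box_slide[of "sw Oy Bx" "sw Mx' By \<otimes> ID My'", symmetric]
  by (simp add: hex hex2 wl[symmetric] wr[symmetric] wl'[symmetric] cancel_w cancel_wt)

lemma P2: "(sw (Mx \<oplus> Ax) Oy \<otimes> ID (My \<oplus> Ay)) \<cdot> (ID Mx \<otimes> sw (Oy \<oplus> My) Ax \<otimes> ID Ay)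
   = (ID (Oy \<oplus> Mx) \<otimes> sw My Ax \<otimes> ID Ay) \<cdot> (sw Mx Oy \<otimes> ID (My \<oplus> Ax \<oplus> Ay))"
  using box_slide[of "sw Mx Oy" "sw My Ax \<otimes> ID Ay"]
  by (simp add: hex hex2 wl[symmetric] wr[symmetric] wl'[symmetric] cancel_w cancel_wt)

end

context DC begin

lemma conj_sw:
  assumes "dm g = A" "cd g = B"
  shows "g \<otimes> ID Y = sw Y B \<cdot> (ID Y \<otimes> g) \<cdot> sw A Y"
proof -
  have n: "sw B Y \<cdot> (g \<otimes> ID Y) = (ID Y \<otimes> g) \<cdot> sw A Y" using sw_nat[of g "ID Y"] assms by simp
  have "g \<otimes> ID Y = (sw Y B \<cdot> sw B Y) \<cdot> (g \<otimes> ID Y)" using assms by (simp add: sw_inv)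
  also have "\<dots> = sw Y B \<cdot> (sw B Y \<cdot> (g \<otimes> ID Y))" using assms by (rule_tac assoc) simp_all
  also have "\<dots> = sw Y B \<cdot> (ID Y \<otimes> g) \<cdot> sw A Y" unfolding n ..
  finally show ?thesis .
qed

lemma tail3: "a \<cdot> b \<cdot> c = d \<Longrightarrow> cd c = dm b \<Longrightarrow> cd b = dm a \<Longrightarrow> cd h = dm c \<Longrightarrow> a \<cdot> b \<cdot> c \<cdot> h = d \<cdot> h"
  by (metis assoc cod_comp dom_comp)

lemma tens_core:
  assumes t: "dm lx = Ax \<oplus> Mx" "cd lx = Bx \<oplus> Mx'" "dm ly = Ay \<oplus> My" "cd ly = By \<oplus> My'"
  shows "(sw Bx Oy \<otimes> ID (By \<oplus> Mx' \<oplus> My')) \<cdot> (ID Bx \<otimes> sw Mx' (Oy \<oplus> By) \<otimes> ID My')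
        \<cdot> ((lx \<cdot> sw Mx Ax) \<otimes> ID Oy \<otimes> (ly \<cdot> sw My Ay)) \<cdot> (ID Mx \<otimes> sw (Oy \<oplus> My) Ax \<otimes> ID Ay)
       = (ID Oy \<otimes> (((ID Bx \<otimes> sw Mx' By) \<otimes> ID My') \<cdot> (lx \<otimes> ly) \<cdot> ((ID Ax \<otimes> sw Ay Mx) \<otimes> ID My) \<cdot> sw (Mx \<oplus> My) (Ax \<oplus> Ay)))
         \<cdot> (sw Mx Oy \<otimes> ID (My \<oplus> Ax \<oplus> Ay))"
proof -
  define gx where "gx = lx \<cdot> sw Mx Ax"
  define gy where "gy = ly \<cdot> sw My Ay"
  have tg: "dm gx = Mx \<oplus> Ax" "cd gx = Bx \<oplus> Mx'" "dm gy = My \<oplus> Ay" "cd gy = By \<oplus> My'"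
    unfolding gx_def gy_def using t by simp_all
  have G: "((ID Bx \<otimes> sw Mx' By) \<otimes> ID My') \<cdot> (lx \<otimes> ly) \<cdot> ((ID Ax \<otimes> sw Ay Mx) \<otimes> ID My) \<cdot> sw (Mx \<oplus> My) (Ax \<oplus> Ay)
      = (ID Bx \<otimes> sw Mx' By \<otimes> ID My') \<cdot> (gx \<otimes> gy) \<cdot> (ID Mx \<otimes> sw My Ax \<otimes> ID Ay)"
  proof -
    have "(lx \<otimes> ly) \<cdot> (ID Ax \<otimes> sw Ay Mx \<otimes> ID My) \<cdot> sw (Mx \<oplus> My) (Ax \<oplus> Ay)
        = (lx \<otimes> ly) \<cdot> (sw Mx Ax \<otimes> sw My Ay) \<cdot> (ID Mx \<otimes> sw My Ax \<otimes> ID Ay)"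
      using Q1 t by simp
    also have "\<dots> = (gx \<otimes> gy) \<cdot> (ID Mx \<otimes> sw My Ax \<otimes> ID Ay)"
      unfolding gx_def gy_def using t interchange[of "sw Mx Ax" lx "sw My Ay" ly] by (simp del: tm_assoc)
    finally show ?thesis using t tg by simp
  qed
  have X: "gx \<otimes> ID Oy \<otimes> gy = (sw Oy (Bx \<oplus> Mx') \<otimes> ID (By \<oplus> My')) \<cdot> (ID Oy \<otimes> gx \<otimes> gy) \<cdot> (sw (Mx \<oplus> Ax) Oy \<otimes> ID (My \<oplus> Ay))"
  proof -
    have "gx \<otimes> ID Oy \<otimes> gy = (gx \<otimes> ID Oy) \<otimes> (ID (By \<oplus> My') \<cdot> gy \<cdot> ID (My \<oplus> Ay))" using tg by simp
    also have "\<dots> = (sw Oy (Bx \<oplus> Mx') \<cdot> (ID Oy \<otimes> gx) \<cdot> sw (Mx \<oplus> Ax) Oy) \<otimes> (ID (By \<oplus> My') \<cdot> gy \<cdot> ID (My \<oplus> Ay))"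
      using conj_sw[OF tg(1,2)] by simp
    also have "\<dots> = (sw Oy (Bx \<oplus> Mx') \<otimes> ID (By \<oplus> My')) \<cdot> (ID Oy \<otimes> gx \<otimes> gy) \<cdot> (sw (Mx \<oplus> Ax) Oy \<otimes> ID (My \<oplus> Ay))"
      using tg interchange[of "(ID Oy \<otimes> gx) \<cdot> sw (Mx \<oplus> Ax) Oy" "sw Oy (Bx \<oplus> Mx')" "gy \<cdot> ID (My \<oplus> Ay)" "ID (By \<oplus> My')"]
        interchange[of "sw (Mx \<oplus> Ax) Oy" "ID Oy \<otimes> gx" "ID (My \<oplus> Ay)" gy] by (simp del: tm_assoc) simp
    finally show ?thesis .
  qed
  have "(sw Bx Oy \<otimes> ID (By \<oplus> Mx' \<oplus> My')) \<cdot> (ID Bx \<otimes> sw Mx' (Oy \<oplus> By) \<otimes> ID My')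
        \<cdot> (gx \<otimes> ID Oy \<otimes> gy) \<cdot> (ID Mx \<otimes> sw (Oy \<oplus> My) Ax \<otimes> ID Ay)
     = (sw Bx Oy \<otimes> ID (By \<oplus> Mx' \<oplus> My')) \<cdot> (ID Bx \<otimes> sw Mx' (Oy \<oplus> By) \<otimes> ID My') \<cdot> (sw Oy (Bx \<oplus> Mx') \<otimes> ID (By \<oplus> My'))
        \<cdot> (ID Oy \<otimes> gx \<otimes> gy) \<cdot> (sw (Mx \<oplus> Ax) Oy \<otimes> ID (My \<oplus> Ay)) \<cdot> (ID Mx \<otimes> sw (Oy \<oplus> My) Ax \<otimes> ID Ay)"
    unfolding X using tg by simp
  also have "\<dots> = (ID (Oy \<oplus> Bx) \<otimes> sw Mx' By \<otimes> ID My') \<cdot> (ID Oy \<otimes> gx \<otimes> gy) \<cdot> (ID (Oy \<oplus> Mx) \<otimes> sw My Ax \<otimes> ID Ay) \<cdot> (sw Mx Oy \<otimes> ID (My \<oplus> Ax \<oplus> Ay))"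
  proof -
    have p1: "(sw Bx Oy \<otimes> ID (By \<oplus> Mx' \<oplus> My')) \<cdot> (ID Bx \<otimes> sw Mx' (Oy \<oplus> By) \<otimes> ID My') \<cdot> (sw Oy (Bx \<oplus> Mx') \<otimes> ID (By \<oplus> My')) \<cdot> h
       = (ID (Oy \<oplus> Bx) \<otimes> sw Mx' By \<otimes> ID My') \<cdot> h" if "cd h = Oy \<oplus> Bx \<oplus> Mx' \<oplus> By \<oplus> My'" for h
      by (rule tail3[OF P1]) (use that in simp_all)
    have p2: "(sw (Mx \<oplus> Ax) Oy \<otimes> ID (My \<oplus> Ay)) \<cdot> (ID Mx \<otimes> sw (Oy \<oplus> My) Ax \<otimes> ID Ay)
       = (ID (Oy \<oplus> Mx) \<otimes> sw My Ax \<otimes> ID Ay) \<cdot> (sw Mx Oy \<otimes> ID (My \<oplus> Ax \<oplus> Ay))" by (rule P2)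
    show ?thesis using tg by (simp add: p1 p2)
  qed
  also have "\<dots> = (ID Oy \<otimes> ((ID Bx \<otimes> sw Mx' By \<otimes> ID My') \<cdot> (gx \<otimes> gy) \<cdot> (ID Mx \<otimes> sw My Ax \<otimes> ID Ay))) \<cdot> (sw Mx Oy \<otimes> ID (My \<oplus> Ax \<oplus> Ay))"
    using tg by (simp add: wl[symmetric] wl'[symmetric])
  finally show ?thesis unfolding G[unfolded gx_def gy_def] unfolding gx_def gy_def .
qed

end

context DC begin

lemma tens_step:
  assumes t: "dm S = Ox \<oplus> Oy" "cd N = Ix \<oplus> Iy" "dm Px = Ix" "cd Px = Ox \<oplus> Mx" "dm Py = Iy" "cd Py = Oy \<oplus> My"
    "dm lx = Ax \<oplus> Mx" "cd lx = Bx \<oplus> Mx'" "dm ly = Ay \<oplus> My" "cd ly = By \<oplus> My'"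
  shows "step (cd S) (Mx \<oplus> My) (Ax \<oplus> Ay) ((S \<otimes> ID (Mx \<oplus> My)) \<cdot> (ID Ox \<otimes> sw Mx Oy \<otimes> ID My) \<cdot> (Px \<otimes> Py) \<cdot> N)
      (((ID Bx \<otimes> sw Mx' By) \<otimes> ID My') \<cdot> (lx \<otimes> ly) \<cdot> ((ID Ax \<otimes> sw Ay Mx) \<otimes> ID My))
   = (((S \<otimes> ID (Bx \<oplus> By)) \<cdot> (ID Ox \<otimes> sw Bx Oy \<otimes> ID By)) \<otimes> ID (Mx' \<oplus> My')) \<cdot> (ID (Ox \<oplus> Bx) \<otimes> sw Mx' (Oy \<oplus> By) \<otimes> ID My')
      \<cdot> (step Ox Mx Ax Px lx \<otimes> step Oy My Ay Py ly) \<cdot> ((ID Ix \<otimes> sw Iy Ax \<otimes> ID Ay) \<cdot> (N \<otimes> ID (Ax \<oplus> Ay)))"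
    (is "?L = ?R")
proof -
  define R' where "R' = (sw Bx Oy \<otimes> ID (By \<oplus> Mx' \<oplus> My')) \<cdot> (ID Bx \<otimes> sw Mx' (Oy \<oplus> By) \<otimes> ID My')
        \<cdot> ((lx \<cdot> sw Mx Ax) \<otimes> ID Oy \<otimes> (ly \<cdot> sw My Ay)) \<cdot> (ID Mx \<otimes> sw (Oy \<oplus> My) Ax \<otimes> ID Ay)"
  define G where "G = ((ID Bx \<otimes> sw Mx' By) \<otimes> ID My') \<cdot> (lx \<otimes> ly) \<cdot> ((ID Ax \<otimes> sw Ay Mx) \<otimes> ID My) \<cdot> sw (Mx \<oplus> My) (Ax \<oplus> Ay)"
  have tG: "dm G = Mx \<oplus> My \<oplus> Ax \<oplus> Ay" "cd G = Bx \<oplus> By \<oplus> Mx' \<oplus> My'" unfolding G_def using t by simp_all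
  have core: "R' = (ID Oy \<otimes> G) \<cdot> (sw Mx Oy \<otimes> ID (My \<oplus> Ax \<oplus> Ay))"
    unfolding R'_def G_def by (rule tens_core[OF t(7-10)])
  define Z where "Z = (S \<otimes> ID (Bx \<oplus> By \<oplus> Mx' \<oplus> My')) \<cdot> (ID Ox \<otimes> R') \<cdot> (Px \<otimes> Py \<otimes> ID (Ax \<oplus> Ay)) \<cdot> (N \<otimes> ID (Ax \<oplus> Ay))"
  have pre: "((S \<otimes> ID (Mx \<oplus> My)) \<cdot> (ID Ox \<otimes> sw Mx Oy \<otimes> ID My) \<cdot> (Px \<otimes> Py) \<cdot> N) \<otimes> ID (Ax \<oplus> Ay)
     = (S \<otimes> ID (Mx \<oplus> My \<oplus> Ax \<oplus> Ay)) \<cdot> (ID Ox \<otimes> sw Mx Oy \<otimes> ID (My \<oplus> Ax \<oplus> Ay)) \<cdot> (Px \<otimes> Py \<otimes> ID (Ax \<oplus> Ay)) \<cdot> (N \<otimes> ID (Ax \<oplus> Ay))"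
    using t by (simp add: wr[symmetric])
  have L1: "?L = (ID (cd S) \<otimes> G) \<cdot> (S \<otimes> ID (Mx \<oplus> My \<oplus> Ax \<oplus> Ay)) \<cdot> (ID Ox \<otimes> sw Mx Oy \<otimes> ID (My \<oplus> Ax \<oplus> Ay)) \<cdot> (Px \<otimes> Py \<otimes> ID (Ax \<oplus> Ay)) \<cdot> (N \<otimes> ID (Ax \<oplus> Ay))"
    unfolding step_def pre G_def using t by (simp add: wl[symmetric] wl'[symmetric])
  have L2: "(ID (cd S) \<otimes> G) \<cdot> (S \<otimes> ID (Mx \<oplus> My \<oplus> Ax \<oplus> Ay)) \<cdot> (ID Ox \<otimes> sw Mx Oy \<otimes> ID (My \<oplus> Ax \<oplus> Ay)) \<cdot> (Px \<otimes> Py \<otimes> ID (Ax \<oplus> Ay)) \<cdot> (N \<otimes> ID (Ax \<oplus> Ay))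
     = (S \<otimes> ID (Bx \<oplus> By \<oplus> Mx' \<oplus> My')) \<cdot> (ID (Ox \<oplus> Oy) \<otimes> G) \<cdot> (ID Ox \<otimes> sw Mx Oy \<otimes> ID (My \<oplus> Ax \<oplus> Ay)) \<cdot> (Px \<otimes> Py \<otimes> ID (Ax \<oplus> Ay)) \<cdot> (N \<otimes> ID (Ax \<oplus> Ay))"
    using box_slide'[of "(ID Ox \<otimes> sw Mx Oy \<otimes> ID (My \<oplus> Ax \<oplus> Ay)) \<cdot> (Px \<otimes> Py \<otimes> ID (Ax \<oplus> Ay)) \<cdot> (N \<otimes> ID (Ax \<oplus> Ay))" S G] t tG
    by simp
  have L3: "Z = (S \<otimes> ID (Bx \<oplus> By \<oplus> Mx' \<oplus> My')) \<cdot> (ID (Ox \<oplus> Oy) \<otimes> G) \<cdot> (ID Ox \<otimes> sw Mx Oy \<otimes> ID (My \<oplus> Ax \<oplus> Ay)) \<cdot> (Px \<otimes> Py \<otimes> ID (Ax \<oplus> Ay)) \<cdot> (N \<otimes> ID (Ax \<oplus> Ay))"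
    unfolding Z_def core using t tG by (simp add: wl[symmetric] wl'[symmetric])
  have L: "?L = Z" using L1 L2 L3 by simp
  have sx: "step Ox Mx Ax Px lx = (ID Ox \<otimes> (lx \<cdot> sw Mx Ax)) \<cdot> (Px \<otimes> ID Ax)"
    unfolding step_def using t by (simp add: wl[symmetric])
  have sy: "step Oy My Ay Py ly = (ID Oy \<otimes> (ly \<cdot> sw My Ay)) \<cdot> (Py \<otimes> ID Ay)"
    unfolding step_def using t by (simp add: wl[symmetric])
  have sxy: "step Ox Mx Ax Px lx \<otimes> step Oy My Ay Py ly = (ID Ox \<otimes> (lx \<cdot> sw Mx Ax) \<otimes> ID Oy \<otimes> (ly \<cdot> sw My Ay)) \<cdot> (Px \<otimes> ID Ax \<otimes> Py \<otimes> ID Ay)"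
    unfolding sx sy using t interchange[of "Px \<otimes> ID Ax" "ID Ox \<otimes> (lx \<cdot> sw Mx Ax)" "Py \<otimes> ID Ay" "ID Oy \<otimes> (ly \<cdot> sw My Ay)"]
    by simp
  have nat: "(ID Ax \<otimes> Py) \<cdot> sw Iy Ax = sw (Oy \<oplus> My) Ax \<cdot> (Py \<otimes> ID Ax)"
    using sw_nat[of Py "ID Ax"] t by simp
  have slideP: "(Px \<otimes> ID Ax \<otimes> Py \<otimes> ID Ay) \<cdot> (ID Ix \<otimes> sw Iy Ax \<otimes> ID Ay) = (ID (Ox \<oplus> Mx) \<otimes> sw (Oy \<oplus> My) Ax \<otimes> ID Ay) \<cdot> (Px \<otimes> Py \<otimes> ID (Ax \<oplus> Ay))"
  proof -
    have "(Px \<otimes> ID Ax \<otimes> Py \<otimes> ID Ay) \<cdot> (ID Ix \<otimes> sw Iy Ax \<otimes> ID Ay) = Px \<otimes> (((ID Ax \<otimes> Py) \<cdot> sw Iy Ax) \<otimes> ID Ay)"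
      using t interchange[of "ID Ix" Px "sw Iy Ax \<otimes> ID Ay" "ID Ax \<otimes> Py \<otimes> ID Ay"] interchange[of "sw Iy Ax" "ID Ax \<otimes> Py" "ID Ay" "ID Ay"]
      by (simp del: tm_assoc) simp
    also have "\<dots> = Px \<otimes> ((sw (Oy \<oplus> My) Ax \<cdot> (Py \<otimes> ID Ax)) \<otimes> ID Ay)" unfolding nat ..
    also have "\<dots> = (ID (Ox \<oplus> Mx) \<otimes> sw (Oy \<oplus> My) Ax \<otimes> ID Ay) \<cdot> (Px \<otimes> Py \<otimes> ID (Ax \<oplus> Ay))"
      using t interchange[of Px "ID (Ox \<oplus> Mx)" "(Py \<otimes> ID Ax) \<otimes> ID Ay" "sw (Oy \<oplus> My) Ax \<otimes> ID Ay"] interchange[of "Py \<otimes> ID Ax" "sw (Oy \<oplus> My) Ax" "ID Ay" "ID Ay"]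
      by (simp del: tm_assoc) simp
    finally show ?thesis .
  qed
  have R1: "?R = (S \<otimes> ID (Bx \<oplus> By \<oplus> Mx' \<oplus> My')) \<cdot> (ID Ox \<otimes> sw Bx Oy \<otimes> ID (By \<oplus> Mx' \<oplus> My')) \<cdot> (ID (Ox \<oplus> Bx) \<otimes> sw Mx' (Oy \<oplus> By) \<otimes> ID My')
      \<cdot> (ID Ox \<otimes> (lx \<cdot> sw Mx Ax) \<otimes> ID Oy \<otimes> (ly \<cdot> sw My Ay)) \<cdot> (ID (Ox \<oplus> Mx) \<otimes> sw (Oy \<oplus> My) Ax \<otimes> ID Ay) \<cdot> (Px \<otimes> Py \<otimes> ID (Ax \<oplus> Ay)) \<cdot> (N \<otimes> ID (Ax \<oplus> Ay))"
  proof -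
    have sP: "(Px \<otimes> ID Ax \<otimes> Py \<otimes> ID Ay) \<cdot> (ID Ix \<otimes> sw Iy Ax \<otimes> ID Ay) \<cdot> h = (ID (Ox \<oplus> Mx) \<otimes> sw (Oy \<oplus> My) Ax \<otimes> ID Ay) \<cdot> (Px \<otimes> Py \<otimes> ID (Ax \<oplus> Ay)) \<cdot> h"
      if "cd h = Ix \<oplus> Iy \<oplus> Ax \<oplus> Ay" for h
      by (rule tailr[OF slideP]) (use t that in simp_all)
    show ?thesis unfolding sxy using t by (simp add: wr[symmetric] sP)
  qed
  have R2: "Z = (S \<otimes> ID (Bx \<oplus> By \<oplus> Mx' \<oplus> My')) \<cdot> (ID Ox \<otimes> sw Bx Oy \<otimes> ID (By \<oplus> Mx' \<oplus> My')) \<cdot> (ID (Ox \<oplus> Bx) \<otimes> sw Mx' (Oy \<oplus> By) \<otimes> ID My')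
      \<cdot> (ID Ox \<otimes> (lx \<cdot> sw Mx Ax) \<otimes> ID Oy \<otimes> (ly \<cdot> sw My Ay)) \<cdot> (ID (Ox \<oplus> Mx) \<otimes> sw (Oy \<oplus> My) Ax \<otimes> ID Ay) \<cdot> (Px \<otimes> Py \<otimes> ID (Ax \<oplus> Ay)) \<cdot> (N \<otimes> ID (Ax \<oplus> Ay))"
    unfolding Z_def R'_def using t by (simp add: wl[symmetric] wl'[symmetric])
  have R: "?R = Z" using R1 R2 by simp
  show ?thesis using L R by simp
qed

end

fun Shf :: "('o, 'm) dcat \<Rightarrow> ('o, 'm) sseq \<Rightarrow> ('o, 'm) sseq \<Rightarrow> nat \<Rightarrow> 'm" where
  "Shf C x y 0 = cid C (cunit C)"
| "Shf C x y (Suc j) = ccomp C (ctm C (Shf C x y j) (cid C (cto C (outp x (Suc j)) (outp y (Suc j)))))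
     (ctm C (cid C (outs C x j)) (ctm C (csym C (outp x (Suc j)) (outs C y j)) (cid C (outp y (Suc j)))))"

fun Unsh :: "('o, 'm) dcat \<Rightarrow> ('o, 'm) sseq \<Rightarrow> ('o, 'm) sseq \<Rightarrow> nat \<Rightarrow> 'm" where
  "Unsh C x y 0 = cid C (cunit C)"
| "Unsh C x y (Suc j) = ccomp C (ctm C (cid C (ins C x j)) (ctm C (csym C (ins C y j) (inp x (Suc j))) (cid C (inp y (Suc j)))))
     (ctm C (Unsh C x y j) (cid C (cto C (inp x (Suc j)) (inp y (Suc j)))))"

context DC begin

lemma tens_basic:
  shows "inp (seq_tens C x y) k = inp x k \<oplus> inp y k" "outp (seq_tens C x y) k = outp x k \<oplus> outp y k"
    "mem (seq_tens C x y) k = mem x k \<oplus> mem y k"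
    "lay (seq_tens C x y) (Suc j) = ((ID (outp x (Suc j)) \<otimes> sw (mem x (Suc j)) (outp y (Suc j))) \<otimes> ID (mem y (Suc j)))
        \<cdot> (lay x (Suc j) \<otimes> lay y (Suc j)) \<cdot> ((ID (inp x (Suc j)) \<otimes> sw (inp y (Suc j)) (mem x j)) \<otimes> ID (mem y j))"
  unfolding seq_tens_def by simp_all

lemma wf_tens:
  assumes wx: "wf_seq C x" and wy: "wf_seq C y"
  shows "wf_seq C (seq_tens C x y)"
  unfolding wf_seq_def
proof (intro conjI allI impI)
  show "inp (seq_tens C x y) 0 = U" "outp (seq_tens C x y) 0 = U" "mem (seq_tens C x y) 0 = U" "lay (seq_tens C x y) 0 = ID U"
    using wx wy by (auto simp: seq_tens_def)
  fix i :: nat assume i: "1 \<le> i"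
  then obtain j where j: "i = Suc j" by (cases i) auto
  show "hom C (lay (seq_tens C x y) i) (inp (seq_tens C x y) i \<oplus> mem (seq_tens C x y) (i - 1)) (outp (seq_tens C x y) i \<oplus> mem (seq_tens C x y) i)"
    unfolding hom_def j tens_basic using wx wy by simp
qed

lemma SH_typ: "dm (Shf C x y j) = outs C x j \<oplus> outs C y j \<and> cd (Shf C x y j) = outs C (seq_tens C x y) j"
  by (induction j) (simp_all add: tens_basic)

lemma Unsh_typ: "dm (Unsh C x y j) = ins C (seq_tens C x y) j \<and> cd (Unsh C x y j) = ins C x j \<oplus> ins C y j"
  by (induction j) (simp_all add: tens_basic)

lemma SH_dom[simp]: "dm (Shf C x y j) = outs C x j \<oplus> outs C y j" and SH_cod[simp]: "cd (Shf C x y j) = outs C (seq_tens C x y) j"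
  and Unsh_dom[simp]: "dm (Unsh C x y j) = ins C (seq_tens C x y) j" and Unsh_cod[simp]: "cd (Unsh C x y j) = ins C x j \<oplus> ins C y j"
  using SH_typ Unsh_typ by auto

lemma tens_Phi:
  assumes wx: "wf_seq C x" and wy: "wf_seq C y"
  shows "Phi C (seq_tens C x y) j = (Shf C x y j \<otimes> ID (mem x j \<oplus> mem y j)) \<cdot> (ID (outs C x j) \<otimes> sw (mem x j) (outs C y j) \<otimes> ID (mem y j))
     \<cdot> (Phi C x j \<otimes> Phi C y j) \<cdot> Unsh C x y j"
proof (induction j)
  case 0 then show ?case using wx wy by (simp add: sw_U)
next
  case (Suc j)
  have wT: "wf_seq C (seq_tens C x y)" by (rule wf_tens[OF wx wy])
  have "Phi C (seq_tens C x y) (Suc j) = step (cd (Shf C x y j)) (mem x j \<oplus> mem y j) (inp x (Suc j) \<oplus> inp y (Suc j))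
     ((Shf C x y j \<otimes> ID (mem x j \<oplus> mem y j)) \<cdot> (ID (outs C x j) \<otimes> sw (mem x j) (outs C y j) \<otimes> ID (mem y j))
     \<cdot> (Phi C x j \<otimes> Phi C y j) \<cdot> Unsh C x y j)
     (((ID (outp x (Suc j)) \<otimes> sw (mem x (Suc j)) (outp y (Suc j))) \<otimes> ID (mem y (Suc j)))
        \<cdot> (lay x (Suc j) \<otimes> lay y (Suc j)) \<cdot> ((ID (inp x (Suc j)) \<otimes> sw (inp y (Suc j)) (mem x j)) \<otimes> ID (mem y j)))"
    using Phi_Suc[OF wT, of j] Suc by (simp only: tens_basic SH_cod)
  also have "\<dots> = (((Shf C x y j \<otimes> ID (outp x (Suc j) \<oplus> outp y (Suc j))) \<cdot> (ID (outs C x j) \<otimes> sw (outp x (Suc j)) (outs C y j) \<otimes> ID (outp y (Suc j)))) \<otimes> ID (mem x (Suc j) \<oplus> mem y (Suc j)))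
      \<cdot> (ID (outs C x j \<oplus> outp x (Suc j)) \<otimes> sw (mem x (Suc j)) (outs C y j \<oplus> outp y (Suc j)) \<otimes> ID (mem y (Suc j)))
      \<cdot> (step (outs C x j) (mem x j) (inp x (Suc j)) (Phi C x j) (lay x (Suc j)) \<otimes> step (outs C y j) (mem y j) (inp y (Suc j)) (Phi C y j) (lay y (Suc j)))
      \<cdot> ((ID (ins C x j) \<otimes> sw (ins C y j) (inp x (Suc j)) \<otimes> ID (inp y (Suc j))) \<cdot> (Unsh C x y j \<otimes> ID (inp x (Suc j) \<oplus> inp y (Suc j))))"
    by (rule tens_step) (use wx wy in simp_all)
  also have "\<dots> = (Shf C x y (Suc j) \<otimes> ID (mem x (Suc j) \<oplus> mem y (Suc j))) \<cdot> (ID (outs C x (Suc j)) \<otimes> sw (mem x (Suc j)) (outs C y (Suc j)) \<otimes> ID (mem y (Suc j)))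
     \<cdot> (Phi C x (Suc j) \<otimes> Phi C y (Suc j)) \<cdot> Unsh C x y (Suc j)"
    using Phi_Suc[OF wx, of j] Phi_Suc[OF wy, of j] by simp
  finally show ?case .
qed

end

context DC begin

lemma outs_cong: "outp a = outp b \<Longrightarrow> outs C a j = outs C b j"
  by (rule outs_local) simp

lemma ins_cong: "inp a = inp b \<Longrightarrow> ins C a j = ins C b j"
  by (induction j) auto

lemma Shf_cong: "outp x = outp x' \<Longrightarrow> outp y = outp y' \<Longrightarrow> Shf C x y j = Shf C x' y' j"
  by (induction j) (simp_all add: outs_cong[of x x'] outs_cong[of y y'])

lemma Unsh_cong: "inp x = inp x' \<Longrightarrow> inp y = inp y' \<Longrightarrow> Unsh C x y j = Unsh C x' y' j"
  by (induction j) (simp_all add: ins_cong[of x x'] ins_cong[of y y'])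

lemma tens_FA:
  assumes wx: "wf_seq C x" and wy: "wf_seq C y"
  shows "FA C j (seq_tens C x y) = Shf C x y j \<cdot> (FA C j x \<otimes> FA C j y) \<cdot> Unsh C x y j"
proof -
  let ?Ox = "outs C x j" and ?Oy = "outs C y j" and ?Mx = "mem x j" and ?My = "mem y j"
  let ?S = "Shf C x y j" and ?N = "Unsh C x y j" and ?Px = "Phi C x j" and ?Py = "Phi C y j"
  have d: "(ID ?Oy \<otimes> dsc ?Mx) \<cdot> sw ?Mx ?Oy = dsc ?Mx \<otimes> ID ?Oy"
    using sw_nat[of "dsc ?Mx" "ID ?Oy"] by (simp add: sw_U')
  have "FA C j (seq_tens C x y) = (ID (cd ?S) \<otimes> (dsc ?Mx \<otimes> dsc ?My)) \<cdot> (?S \<otimes> ID (?Mx \<oplus> ?My)) \<cdot> (ID ?Ox \<otimes> sw ?Mx ?Oy \<otimes> ID ?My) \<cdot> (?Px \<otimes> ?Py) \<cdot> ?N"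
    unfolding FA_def' tens_Phi[OF wx wy] by (simp add: tens_basic dsc_ob)
  also have "\<dots> = ?S \<cdot> (ID (?Ox \<oplus> ?Oy) \<otimes> dsc ?Mx \<otimes> dsc ?My) \<cdot> (ID ?Ox \<otimes> sw ?Mx ?Oy \<otimes> ID ?My) \<cdot> (?Px \<otimes> ?Py) \<cdot> ?N"
    using box_slide'[of "(ID ?Ox \<otimes> sw ?Mx ?Oy \<otimes> ID ?My) \<cdot> (?Px \<otimes> ?Py) \<cdot> ?N" ?S "dsc ?Mx \<otimes> dsc ?My"] wx wy by simp
  also have "(ID (?Ox \<oplus> ?Oy) \<otimes> dsc ?Mx \<otimes> dsc ?My) \<cdot> (ID ?Ox \<otimes> sw ?Mx ?Oy \<otimes> ID ?My) \<cdot> (?Px \<otimes> ?Py) \<cdot> ?N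
      = (ID ?Ox \<otimes> dsc ?Mx \<otimes> ID ?Oy \<otimes> dsc ?My) \<cdot> (?Px \<otimes> ?Py) \<cdot> ?N"
  proof -
    have e: "(ID (?Ox \<oplus> ?Oy) \<otimes> dsc ?Mx \<otimes> dsc ?My) \<cdot> (ID ?Ox \<otimes> sw ?Mx ?Oy \<otimes> ID ?My) = ID ?Ox \<otimes> dsc ?Mx \<otimes> ID ?Oy \<otimes> dsc ?My"
    proof -
      have "(ID (?Ox \<oplus> ?Oy) \<otimes> dsc ?Mx \<otimes> dsc ?My) \<cdot> (ID ?Ox \<otimes> sw ?Mx ?Oy \<otimes> ID ?My)
          = ID ?Ox \<otimes> (((ID ?Oy \<otimes> dsc ?Mx) \<cdot> sw ?Mx ?Oy) \<otimes> (dsc ?My \<cdot> ID ?My))"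
        using interchange[of "sw ?Mx ?Oy" "ID ?Oy \<otimes> dsc ?Mx" "ID ?My" "dsc ?My"] wl[of "sw ?Mx ?Oy \<otimes> ID ?My" "ID ?Oy \<otimes> dsc ?Mx \<otimes> dsc ?My" ?Ox]
        by (simp del: tm_assoc) simp
      then show ?thesis unfolding d by simp
    qed
    show ?thesis by (rule tail_of[OF e]) (use wx wy in simp_all)
  qed
  also have "(ID ?Ox \<otimes> dsc ?Mx \<otimes> ID ?Oy \<otimes> dsc ?My) \<cdot> (?Px \<otimes> ?Py) \<cdot> ?N = (FA C j x \<otimes> FA C j y) \<cdot> ?N"
  proof -
    have "(ID ?Ox \<otimes> dsc ?Mx \<otimes> ID ?Oy \<otimes> dsc ?My) \<cdot> (?Px \<otimes> ?Py) = FA C j x \<otimes> FA C j y"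
      unfolding FA_def' using interchange[of ?Px "ID ?Ox \<otimes> dsc ?Mx" ?Py "ID ?Oy \<otimes> dsc ?My"] wx wy by simp
    then show ?thesis by (rule tail_of) (use wx wy in simp_all)
  qed
  finally show ?thesis .
qed

end

context DC begin

definition rel :: "nat \<Rightarrow> ('o, 'm) sseq \<Rightarrow> ('o, 'm) sseq \<Rightarrow> bool" where
  "rel n a b \<longleftrightarrow> (\<forall>k\<le>n. FA C k a = FA C k b)"

definition okset :: "('o, 'm) eqn set \<Rightarrow> bool" where
  "okset G \<longleftrightarrow> (\<forall>(x, y)\<in>G. wf_seq C x \<and> wf_seq C y \<and> inp x = inp y \<and> outp x = outp y)"

definition relset :: "nat \<Rightarrow> ('o, 'm) eqn set \<Rightarrow> bool" where
  "relset n G \<longleftrightarrow> (\<forall>(x, y)\<in>G. rel n x y)"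

lemma delay_inp_eq: "inp a = inp b \<Longrightarrow> inp (delay C a) = inp (delay C b)"
  and delay_outp_eq: "outp a = outp b \<Longrightarrow> outp (delay C a) = outp (delay C b)"
  by (auto simp: delay_def)

lemma rel_delay: "wf_seq C a \<Longrightarrow> wf_seq C b \<Longrightarrow> rel m a b \<Longrightarrow> rel (Suc m) (delay C a) (delay C b)"
  unfolding rel_def
proof (intro allI impI)
  fix k assume wa: "wf_seq C a" and wb: "wf_seq C b" and r: "\<forall>k\<le>m. FA C k a = FA C k b" and k: "k \<le> Suc m"
  show "FA C k (delay C a) = FA C k (delay C b)"
  proof (cases k)
    case 0 then show ?thesis using FA0 wf_delay wa wb by simp
  next
    case (Suc k') then show ?thesis using r k delay_FA wa wb by simp
  qed
qed

lemma rel0: "wf_seq C a \<Longrightarrow> wf_seq C b \<Longrightarrow> rel 0 a b"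
  unfolding rel_def using FA0 by simp

lemma rel_mono: "rel n a b \<Longrightarrow> m \<le> n \<Longrightarrow> rel m a b"
  unfolding rel_def by simp

lemma good_wf: "good C a \<Longrightarrow> wf_seq C a" unfolding good_def by simp

lemma main:
  assumes "deriv C G a b"
  shows "okset G \<longrightarrow> wf_seq C a \<and> wf_seq C b \<and> inp a = inp b \<and> outp a = outp b \<and> (\<forall>n. relset n G \<longrightarrow> rel n a b)"
  using assms
proof (induction rule: deriv.induct)
  case (hyp a b G)
  then show ?case unfolding okset_def relset_def by auto
next
  case (cm s k bk N c g G)
  show ?case using cm_sound[OF good_wf[OF cm(1)] cm(2-6)] unfolding rel_def by simp
next
  case (im s k bk p g G)
  show ?case using im_sound[OF good_wf[OF im(1)] im(2-6)] unfolding rel_def by simp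
next
  case (refl a G)
  have "wf_seq C a" using good_wf[OF refl] .
  then show ?case unfolding rel_def by simp
next
  case (sym G a b)
  then show ?case unfolding rel_def by simp
next
  case (trans G a b c)
  then show ?case unfolding rel_def by simp
next
  case (comp_left G a b h)
  show ?case
  proof
    assume ok: "okset G"
    have A: "wf_seq C a \<and> wf_seq C b \<and> inp a = inp b \<and> outp a = outp b \<and> (\<forall>n. relset n G \<longrightarrow> rel n a b)"
      using comp_left.IH ok by (rule mp)
    have wa: "wf_seq C a" and wb: "wf_seq C b" and io: "inp a = inp b" and oo: "outp a = outp b"
      and r: "\<forall>n. relset n G \<longrightarrow> rel n a b" using A by blast+
    have gh: "good C h" by fact
    have wh: "wf_seq C h" using good_wf[OF gh] .
    have o1: "outp a = inp h" by fact
    have o2: "outp b = inp h" by fact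
    show "wf_seq C (seq_comp C h a) \<and> wf_seq C (seq_comp C h b) \<and> inp (seq_comp C h a) = inp (seq_comp C h b) \<and>
          outp (seq_comp C h a) = outp (seq_comp C h b) \<and> (\<forall>n. relset n G \<longrightarrow> rel n (seq_comp C h a) (seq_comp C h b))"
      using wf_comp[OF wa wh o1] wf_comp[OF wb wh o2] io
        comp_FA[OF wa wh o1] comp_FA[OF wb wh o2] r
      by (simp add: comp_basic[OF wa wh o1] comp_basic[OF wb wh o2] rel_def)
  qed
next
  case (comp_right G a b h)
  show ?case
  proof
    assume ok: "okset G"
    have A: "wf_seq C a \<and> wf_seq C b \<and> inp a = inp b \<and> outp a = outp b \<and> (\<forall>n. relset n G \<longrightarrow> rel n a b)"
      using comp_right.IH ok by (rule mp)
    have wa: "wf_seq C a" and wb: "wf_seq C b" and io: "inp a = inp b" and oo: "outp a = outp b"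
      and r: "\<forall>n. relset n G \<longrightarrow> rel n a b" using A by blast+
    have gh: "good C h" by fact
    have wh: "wf_seq C h" using good_wf[OF gh] .
    have o1: "outp h = inp a" by fact
    have o2: "outp h = inp b" by fact
    show "wf_seq C (seq_comp C a h) \<and> wf_seq C (seq_comp C b h) \<and> inp (seq_comp C a h) = inp (seq_comp C b h) \<and>
          outp (seq_comp C a h) = outp (seq_comp C b h) \<and> (\<forall>n. relset n G \<longrightarrow> rel n (seq_comp C a h) (seq_comp C b h))"
      using wf_comp[OF wh wa o1] wf_comp[OF wh wb o2] oo
        comp_FA[OF wh wa o1] comp_FA[OF wh wb o2] r
      by (simp add: comp_basic[OF wh wa o1] comp_basic[OF wh wb o2] rel_def)
  qed
next
  case (tens_left G a b h)
  show ?case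
  proof
    assume ok: "okset G"
    have A: "wf_seq C a \<and> wf_seq C b \<and> inp a = inp b \<and> outp a = outp b \<and> (\<forall>n. relset n G \<longrightarrow> rel n a b)"
      using tens_left.IH ok by (rule mp)
    have wa: "wf_seq C a" and wb: "wf_seq C b" and io: "inp a = inp b" and oo: "outp a = outp b"
      and r: "\<forall>n. relset n G \<longrightarrow> rel n a b" using A by blast+
    have gh: "good C h" by fact
    have wh: "wf_seq C h" using good_wf[OF gh] .
    have "inp (seq_tens C h a) = inp (seq_tens C h b)" "outp (seq_tens C h a) = outp (seq_tens C h b)"
      unfolding seq_tens_def using io oo by simp_all
    moreover have "Shf C h a k = Shf C h b k" "Unsh C h a k = Unsh C h b k" for k
      using Shf_cong[of h h a b] Unsh_cong[of h h a b] io oo by simp_all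
    ultimately show "wf_seq C (seq_tens C h a) \<and> wf_seq C (seq_tens C h b) \<and> inp (seq_tens C h a) = inp (seq_tens C h b) \<and>
          outp (seq_tens C h a) = outp (seq_tens C h b) \<and> (\<forall>n. relset n G \<longrightarrow> rel n (seq_tens C h a) (seq_tens C h b))"
      using wf_tens[OF wh wa] wf_tens[OF wh wb] tens_FA[OF wh wa] tens_FA[OF wh wb] r
      by (simp add: rel_def)
  qed
next
  case (tens_right G a b h)
  show ?case
  proof
    assume ok: "okset G"
    have A: "wf_seq C a \<and> wf_seq C b \<and> inp a = inp b \<and> outp a = outp b \<and> (\<forall>n. relset n G \<longrightarrow> rel n a b)"
      using tens_right.IH ok by (rule mp)
    have wa: "wf_seq C a" and wb: "wf_seq C b" and io: "inp a = inp b" and oo: "outp a = outp b"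
      and r: "\<forall>n. relset n G \<longrightarrow> rel n a b" using A by blast+
    have gh: "good C h" by fact
    have wh: "wf_seq C h" using good_wf[OF gh] .
    have "inp (seq_tens C a h) = inp (seq_tens C b h)" "outp (seq_tens C a h) = outp (seq_tens C b h)"
      unfolding seq_tens_def using io oo by simp_all
    moreover have "Shf C a h k = Shf C b h k" "Unsh C a h k = Unsh C b h k" for k
      using Shf_cong[of a b h h] Unsh_cong[of a b h h] io oo by simp_all
    ultimately show "wf_seq C (seq_tens C a h) \<and> wf_seq C (seq_tens C b h) \<and> inp (seq_tens C a h) = inp (seq_tens C b h) \<and>
          outp (seq_tens C a h) = outp (seq_tens C b h) \<and> (\<forall>n. relset n G \<longrightarrow> rel n (seq_tens C a h) (seq_tens C b h))"
      using wf_tens[OF wa wh] wf_tens[OF wb wh] tens_FA[OF wa wh] tens_FA[OF wb wh] r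
      by (simp add: rel_def)
  qed
next
  case (coind as bs G)
  show ?case
  proof
    assume ok: "okset G"
    have wa: "\<And>n. wf_seq C (as n)" and wb: "\<And>n. wf_seq C (bs n)" using coind(1) good_wf by blast+
    have ok': "okset (insert (delay C (as (Suc n)), delay C (bs (Suc n))) G)" for n
    proof -
      have g: "good C (as (Suc n)) \<and> good C (bs (Suc n)) \<and> inp (as (Suc n)) = inp (bs (Suc n)) \<and> outp (as (Suc n)) = outp (bs (Suc n))"
        using coind(1) by blast
      have "wf_seq C (delay C (as (Suc n))) \<and> wf_seq C (delay C (bs (Suc n))) \<and> inp (delay C (as (Suc n))) = inp (delay C (bs (Suc n)))
          \<and> outp (delay C (as (Suc n))) = outp (delay C (bs (Suc n)))"
        using wf_delay[OF wa] wf_delay[OF wb] delay_inp_eq[of "as (Suc n)" "bs (Suc n)"] delay_outp_eq[of "as (Suc n)" "bs (Suc n)"] g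
        by blast
      then show ?thesis using ok unfolding okset_def by blast
    qed
    have IH: "rel m (as n) (bs n)" if r: "relset m (insert (delay C (as (Suc n)), delay C (bs (Suc n))) G)" for n m
    proof -
      have "okset (insert (delay C (as (Suc n)), delay C (bs (Suc n))) G) \<longrightarrow> wf_seq C (as n) \<and> wf_seq C (bs n) \<and>
         inp (as n) = inp (bs n) \<and> outp (as n) = outp (bs n) \<and>
         (\<forall>na. relset na (insert (delay C (as (Suc n)), delay C (bs (Suc n))) G) \<longrightarrow> rel na (as n) (bs n))"
        using conjunct2[OF spec[OF coind(2), of n]] .
      then have "\<forall>na. relset na (insert (delay C (as (Suc n)), delay C (bs (Suc n))) G) \<longrightarrow> rel na (as n) (bs n)"
        using ok'[of n] by blast
      then show ?thesis using r by blast
    qed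
    have "\<forall>n. relset n G \<longrightarrow> rel n (as 0) (bs 0)"
    proof (intro allI impI)
      fix n0 assume rG: "relset n0 G"
      have "m \<le> n0 \<Longrightarrow> \<forall>i. rel m (as i) (bs i)" for m
      proof (induction m)
        case 0 then show ?case using rel0 wa wb by simp
      next
        case (Suc m)
        show ?case
        proof
          fix i
          have "rel (Suc m) (delay C (as (Suc i))) (delay C (bs (Suc i)))"
            using rel_delay wa wb Suc by simp
          moreover have "relset (Suc m) G" using rG Suc(2) rel_mono unfolding relset_def by blast
          ultimately have "relset (Suc m) (insert (delay C (as (Suc i)), delay C (bs (Suc i))) G)"
            unfolding relset_def by simp
          then show "rel (Suc m) (as i) (bs i)" by (rule IH)
        qed
      qed
      then show "rel n0 (as 0) (bs 0)" by simp
    qed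
    then show "wf_seq C (as 0) \<and> wf_seq C (bs 0) \<and> inp (as 0) = inp (bs 0) \<and> outp (as 0) = outp (bs 0) \<and>
         (\<forall>n. relset n G \<longrightarrow> rel n (as 0) (bs 0))"
      using wa wb coind(1) by simp
  qed
qed

end

theorem lemma4:
  fixes C :: "('o, 'm) dcat" and a b :: "('o, 'm) sseq"
  assumes "discard_cat C"
    and "wf_seq C a" and "regular a"
    and "wf_seq C b" and "regular b"
    and "inp a = inp b" and "outp a = outp b"
    and "sequiv C a b"
  shows "\<forall>k\<ge>1. FA C k a = FA C k b"
proof -
  interpret DC C by standard (rule assms(1))
  have "deriv C {} a b" using assms(8) unfolding sequiv_def .
  then have "\<forall>n. relset n {} \<longrightarrow> rel n a b" using main unfolding okset_def by blast
  then have "\<forall>n. rel n a b" unfolding relset_def by simp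
  then show ?thesis unfolding rel_def by blast
qed


end
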